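(* Let $\mathcal{L}$ be an unbounded graphon shift operator. Then there exists a sequence of weighted graphs $(G_n)_n$ with GSOs $(\mathbf{\Delta}_n)_n$ such that $G_n\xrightarrow[n\to\infty]{U}\mathcal{L}$.
   Context: A graph with GSO is $G=(V,E,\mathbf{\Delta})$, $V=\{1,\dots,N\}$, $\mathbf{\Delta}\in\mathbb{R}^{N\times N}$ symmetric; its GWM is $\boldsymbol{A}=N\mathbf{\Delta}$. For a permutation $\pi$ of $\{1,\dots,N\}$, $\pi(\boldsymbol{A})=(\boldsymbol{A}_{\pi(i)\pi(j)})_{i,j}$. With $P_k=[(k-1)/N,k/N)$, the induced graphon is $W_{\boldsymbol{A}}(u,v)=\sum_{i,j}\boldsymbol{A}_{ij}\chi_{P_i}(u)\chi_{P_j}(v)$. A graphon is a bounded symmetric measurable $W:[0,1]^2\to\mathbb{R}$ and $T_W\psi(v)=\int_0^1W(v,u)\psi(u)du$ on $L^2[0,1]$. Let $\mathcal{L}$ be a self-adjoint operator defined on a dense subspace of $L^2[0,1]$ whose spectrum consists only of eigenvalues $\lambda_j$, with eigenspaces $W_j$ and orthogonal projections $P_j$ onto them. For $\lambda>0$ the spectral projection is $P_{\mathcal{L}}(\lambda)=\sum_{|\lambda_j|\le\lambda}P_j$ (projection onto the Paley–Wiener space $\bigoplus\{W_j:|\lambda_j|\le\lambda\}$). $\mathcal{L}$ is an unbounded graphon shift operator if for every $\lambda>0$ there is a graphon $W^\lambda$ with $\mathcal{L}P_{\mathcal{L}}(\lambda)=T_{W^\lambda}$. A sequence of graphs $(G_n)_n$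 with GWMs $(\boldsymbol{A}_n)_n$ converges to $\mathcal{L}$, written $G_n\xrightarrow{U}\mathcal{L}$, if there exist permutations $\pi_n$ of the node sets such that for every $\lambda$, $\|P_{\mathcal{L}}(\lambda)T_{W_{\pi_n(\boldsymbol{A}_n)}}P_{\mathcal{L}}(\lambda)-\mathcal{L}P_{\mathcal{L}}(\lambda)\|_{L^2[0,1]\to L^2[0,1]}\to 0$. *)

theory Defs
  imports "HOL-Analysis.Analysis" "HOL-Combinatorics.Permutations"
begin

definition sq_int :: "(real \<Rightarrow> real) \<Rightarrow> bool" where
  "sq_int f \<longleftrightarrow> f \<in> borel_measurable (lebesgue_on {0..1}) \<and>
                  integrable (lebesgue_on {0..1}) (\<lambda>x. (f x)\<^sup>2)"

definition l2_inner :: "(real \<Rightarrow> real) \<Rightarrow> (real \<Rightarrow> real) \<Rightarrow> real" where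
  "l2_inner f g = (LINT x | lebesgue_on {0..1}. f x * g x)"

definition l2_norm :: "(real \<Rightarrow> real) \<Rightarrow> real" where
  "l2_norm f = sqrt (l2_inner f f)"

text \<open>Equality as elements of L^2[0,1] (almost everywhere on [0,1]).\<close>
definition ae_eq :: "(real \<Rightarrow> real) \<Rightarrow> (real \<Rightarrow> real) \<Rightarrow> bool" where
  "ae_eq f g \<longleftrightarrow> (AE x in lebesgue_on {0..1}. f x = g x)"

definition lin_span :: "(real \<Rightarrow> real) set \<Rightarrow> (real \<Rightarrow> real) set" where
  "lin_span U = {(\<lambda>x. \<Sum>i<k. c i * g i x) | (k::nat) c g. \<forall>i<k. g i \<in> U}"

definition l2_closure :: "(real \<Rightarrow> real) set \<Rightarrow> (real \<Rightarrow> real) set" where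
  "l2_closure U = {f. sq_int f \<and> (\<forall>e>0. \<exists>g\<in>U. l2_norm (\<lambda>x. f x - g x) < e)}"

text \<open>An operator is given by its domain D (a subspace of L^2[0,1]) and its action L on D.\<close>
definition self_adjoint_op :: "(real \<Rightarrow> real) set \<Rightarrow> ((real \<Rightarrow> real) \<Rightarrow> (real \<Rightarrow> real)) \<Rightarrow> bool" where
  "self_adjoint_op D L \<longleftrightarrow>
     D \<subseteq> {f. sq_int f} \<and>
     (\<forall>f\<in>D. sq_int (L f)) \<and>
     (\<forall>f\<in>D. \<forall>g\<in>D. \<forall>a b::real. (\<lambda>x. a * f x + b * g x) \<in> D \<and>
          ae_eq (L (\<lambda>x. a * f x + b * g x)) (\<lambda>x. a * L f x + b * L g x)) \<and>
     (\<forall>f. sq_int f \<longrightarrow> (\<forall>e>0. \<exists>g\<in>D. l2_norm (\<lambda>x. f x - g x) < e)) \<and>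
     (\<forall>f\<in>D. \<forall>g\<in>D. l2_inner (L f) g = l2_inner f (L g)) \<and>
     (\<forall>g. sq_int g \<longrightarrow>
          ((\<exists>h. sq_int h \<and> (\<forall>f\<in>D. l2_inner (L f) g = l2_inner f h)) \<longleftrightarrow> g \<in> D))"

definition eigenspace_op :: "(real \<Rightarrow> real) set \<Rightarrow> ((real \<Rightarrow> real) \<Rightarrow> (real \<Rightarrow> real)) \<Rightarrow> real \<Rightarrow> (real \<Rightarrow> real) set" where
  "eigenspace_op D L \<mu> = {f\<in>D. ae_eq (L f) (\<lambda>x. \<mu> * f x)}"

definition is_eigenvalue :: "(real \<Rightarrow> real) set \<Rightarrow> ((real \<Rightarrow> real) \<Rightarrow> (real \<Rightarrow> real)) \<Rightarrow> real \<Rightarrow> bool" where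
  "is_eigenvalue D L \<mu> \<longleftrightarrow> (\<exists>f\<in>eigenspace_op D L \<mu>. l2_norm f \<noteq> 0)"

definition in_resolvent :: "(real \<Rightarrow> real) set \<Rightarrow> ((real \<Rightarrow> real) \<Rightarrow> (real \<Rightarrow> real)) \<Rightarrow> real \<Rightarrow> bool" where
  "in_resolvent D L z \<longleftrightarrow>
     (\<forall>g. sq_int g \<longrightarrow> (\<exists>f\<in>D. ae_eq (\<lambda>x. L f x - z * f x) g)) \<and>
     (\<exists>C. \<forall>f\<in>D. l2_norm f \<le> C * l2_norm (\<lambda>x. L f x - z * f x))"

definition spectrum_only_eigenvalues :: "(real \<Rightarrow> real) set \<Rightarrow> ((real \<Rightarrow> real) \<Rightarrow> (real \<Rightarrow> real)) \<Rightarrow> bool" where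
  "spectrum_only_eigenvalues D L \<longleftrightarrow> (\<forall>z. \<not> in_resolvent D L z \<longrightarrow> is_eigenvalue D L z)"

definition PW_space :: "(real \<Rightarrow> real) set \<Rightarrow> ((real \<Rightarrow> real) \<Rightarrow> (real \<Rightarrow> real)) \<Rightarrow> real \<Rightarrow> (real \<Rightarrow> real) set" where
  "PW_space D L lam = l2_closure (lin_span (\<Union>{eigenspace_op D L \<mu> | \<mu>. \<bar>\<mu>\<bar> \<le> lam}))"

definition spec_proj :: "(real \<Rightarrow> real) set \<Rightarrow> ((real \<Rightarrow> real) \<Rightarrow> (real \<Rightarrow> real)) \<Rightarrow> real \<Rightarrow> (real \<Rightarrow> real) \<Rightarrow> (real \<Rightarrow> real)" where
  "spec_proj D L lam f = (SOME p. p \<in> PW_space D L lam \<and>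
        (\<forall>v\<in>PW_space D L lam. l2_inner (\<lambda>x. f x - p x) v = 0))"

definition graphon :: "(real \<Rightarrow> real \<Rightarrow> real) \<Rightarrow> bool" where
  "graphon W \<longleftrightarrow>
     (\<lambda>(u,v). W u v) \<in> borel_measurable (lebesgue_on ({0..1} \<times> {0..1})) \<and>
     (\<exists>B. \<forall>u\<in>{0..1}. \<forall>v\<in>{0..1}. \<bar>W u v\<bar> \<le> B) \<and>
     (\<forall>u\<in>{0..1}. \<forall>v\<in>{0..1}. W u v = W v u)"

definition T_op :: "(real \<Rightarrow> real \<Rightarrow> real) \<Rightarrow> (real \<Rightarrow> real) \<Rightarrow> (real \<Rightarrow> real)" where
  "T_op W \<psi> = (\<lambda>v. LINT u | lebesgue_on {0..1}. W v u * \<psi> u)"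

definition unbounded_GSO :: "(real \<Rightarrow> real) set \<Rightarrow> ((real \<Rightarrow> real) \<Rightarrow> (real \<Rightarrow> real)) \<Rightarrow> bool" where
  "unbounded_GSO D L \<longleftrightarrow>
     self_adjoint_op D L \<and> spectrum_only_eigenvalues D L \<and>
     (\<forall>lam>0. \<exists>W. graphon W \<and>
        (\<forall>f. sq_int f \<longrightarrow> spec_proj D L lam f \<in> D \<and>
                           ae_eq (L (spec_proj D L lam f)) (T_op W f)))"

text \<open>A weighted graph on nodes {1..N} with symmetric GSO Delta.\<close>
definition is_GSO :: "nat \<Rightarrow> (nat \<Rightarrow> nat \<Rightarrow> real) \<Rightarrow> bool" where
  "is_GSO N \<Delta> \<longleftrightarrow> N \<ge> 1 \<and> (\<forall>i\<in>{1..N}. \<forall>j\<in>{1..N}. \<Delta> i j = \<Delta> j i)"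

definition GWM :: "nat \<Rightarrow> (nat \<Rightarrow> nat \<Rightarrow> real) \<Rightarrow> (nat \<Rightarrow> nat \<Rightarrow> real)" where
  "GWM N \<Delta> = (\<lambda>i j. real N * \<Delta> i j)"

definition perm_mat :: "(nat \<Rightarrow> nat) \<Rightarrow> (nat \<Rightarrow> nat \<Rightarrow> real) \<Rightarrow> (nat \<Rightarrow> nat \<Rightarrow> real)" where
  "perm_mat \<pi> A = (\<lambda>i j. A (\<pi> i) (\<pi> j))"

definition induced_graphon :: "nat \<Rightarrow> (nat \<Rightarrow> nat \<Rightarrow> real) \<Rightarrow> (real \<Rightarrow> real \<Rightarrow> real)" where
  "induced_graphon N A = (\<lambda>u v. \<Sum>i\<in>{1..N}. \<Sum>j\<in>{1..N}.
      A i j * indicator {(real i - 1) / real N ..< real i / real N} u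
            * indicator {(real j - 1) / real N ..< real j / real N} v)"

text \<open>G_n -> L: operator norm of P T_{W_{pi_n(A_n)}} P - L P tends to 0 for every lam > 0.\<close>
definition graphs_converge_U :: "(nat \<Rightarrow> nat) \<Rightarrow> (nat \<Rightarrow> nat \<Rightarrow> nat \<Rightarrow> real) \<Rightarrow>
    (real \<Rightarrow> real) set \<Rightarrow> ((real \<Rightarrow> real) \<Rightarrow> (real \<Rightarrow> real)) \<Rightarrow> bool" where
  "graphs_converge_U N \<Delta> D L \<longleftrightarrow>
     (\<exists>\<pi>. (\<forall>n. \<pi> n permutes {1..N n}) \<and>
       (\<forall>lam>0. \<forall>e>0. \<forall>\<^sub>F n in sequentially. \<forall>f. sq_int f \<longrightarrow>
          l2_norm (\<lambda>x. spec_proj D L lam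
                         (T_op (induced_graphon (N n) (perm_mat (\<pi> n) (GWM (N n) (\<Delta> n))))
                               (spec_proj D L lam f)) x
                       - L (spec_proj D L lam f) x) \<le> e * l2_norm f))"

end

theory Submission
  imports Defs
begin


abbreviation "M01 \<equiv> lebesgue_on {0..1::real}"

lemma fin_M01: "finite_measure M01"
  by (rule finite_measure_lebesgue_on) simp

lemma emeasure_M01: "emeasure M01 {0..1} = 1"
  by (simp add: emeasure_restrict_space)

lemma measure_M01: "measure M01 {0..1} = 1"
  by (simp add: measure_restrict_space)

lemma meas_ae:
  fixes f g :: "real \<Rightarrow> real"
  assumes "f \<in> borel_measurable M01" "AE x in M01. f x = g x"
  shows "g \<in> borel_measurable M01"
proof -
  have s: "{0..1::real} \<inter> space lebesgue \<in> sets lebesgue" by simp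
  have "(\<lambda>x. indicator {0..1::real} x *\<^sub>R f x) \<in> borel_measurable lebesgue"
    using assms(1) borel_measurable_restrict_space_iff[OF s, of f] by simp
  moreover have "AE x in lebesgue. indicator {0..1::real} x *\<^sub>R f x = indicator {0..1::real} x *\<^sub>R g x"
    using assms(2) AE_restrict_space_iff[OF s] by (auto elim!: eventually_mono simp: indicator_def)
  ultimately have "(\<lambda>x. indicator {0..1::real} x *\<^sub>R g x) \<in> borel_measurable lebesgue"
    by (rule borel_measurable_AE)
  then show ?thesis using borel_measurable_restrict_space_iff[OF s, of g] by simp
qed

lemma sq_int_meas: "sq_int f \<Longrightarrow> f \<in> borel_measurable M01"
  by (simp add: sq_int_def)

lemma sq_int_sq: "sq_int f \<Longrightarrow> integrable M01 (\<lambda>x. (f x)\<^sup>2)"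
  by (simp add: sq_int_def)

lemma sq_int_integrable: "sq_int f \<Longrightarrow> integrable M01 f"
  using finite_measure.square_integrable_imp_integrable[OF fin_M01] by (auto simp: sq_int_def)

lemma sq_int_prod:
  assumes "sq_int f" "sq_int g"
  shows "integrable M01 (\<lambda>x. f x * g x)"
proof (rule Bochner_Integration.integrable_bound)
  show "integrable M01 (\<lambda>x. (f x)\<^sup>2 + (g x)\<^sup>2)"
    using assms by (simp add: sq_int_def)
  show "(\<lambda>x. f x * g x) \<in> borel_measurable M01"
    using assms by (auto simp: sq_int_def intro!: borel_measurable_times)
  show "AE x in M01. norm (f x * g x) \<le> norm ((f x)\<^sup>2 + (g x)\<^sup>2)"
  proof (rule AE_I2)
    fix x
    have "0 \<le> (\<bar>f x\<bar> - \<bar>g x\<bar>)\<^sup>2" by simp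
    then have "2 * (\<bar>f x\<bar> * \<bar>g x\<bar>) \<le> (f x)\<^sup>2 + (g x)\<^sup>2"
      by (simp add: power2_eq_square algebra_simps)
    moreover have "0 \<le> \<bar>f x\<bar> * \<bar>g x\<bar>" by simp
    ultimately have "\<bar>f x\<bar> * \<bar>g x\<bar> \<le> (f x)\<^sup>2 + (g x)\<^sup>2" by linarith
    then show "norm (f x * g x) \<le> norm ((f x)\<^sup>2 + (g x)\<^sup>2)"
      by (simp add: abs_mult)
  qed
qed

lemma sq_int_lin:
  assumes "sq_int f" "sq_int g"
  shows "sq_int (\<lambda>x. a * f x + b * g x)"
  unfolding sq_int_def
proof
  show "(\<lambda>x. a * f x + b * g x) \<in> borel_measurable M01"
    using assms by (auto simp: sq_int_def intro!: borel_measurable_times borel_measurable_add)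
  have "integrable M01 (\<lambda>x. a\<^sup>2 * (f x)\<^sup>2 + 2 * a * b * (f x * g x) + b\<^sup>2 * (g x)\<^sup>2)"
    using assms sq_int_prod[OF assms] by (simp add: sq_int_def)
  moreover have "(\<lambda>x. a\<^sup>2 * (f x)\<^sup>2 + 2 * a * b * (f x * g x) + b\<^sup>2 * (g x)\<^sup>2) = (\<lambda>x. (a * f x + b * g x)\<^sup>2)"
    by (rule ext) (simp add: power2_eq_square algebra_simps)
  ultimately show "integrable M01 (\<lambda>x. (a * f x + b * g x)\<^sup>2)"
    by simp
qed

lemma sq_int_add: "sq_int f \<Longrightarrow> sq_int g \<Longrightarrow> sq_int (\<lambda>x. f x + g x)"
  using sq_int_lin[of f g 1 1] by simp

lemma sq_int_diff: "sq_int f \<Longrightarrow> sq_int g \<Longrightarrow> sq_int (\<lambda>x. f x - g x)"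
  using sq_int_lin[of f g 1 "-1"] by simp

lemma sq_int_cmult: "sq_int f \<Longrightarrow> sq_int (\<lambda>x. a * f x)"
  using sq_int_lin[of f f a 0] by simp

lemma sq_int_bounded:
  assumes "f \<in> borel_measurable M01" "\<And>x. x \<in> {0..1} \<Longrightarrow> \<bar>f x\<bar> \<le> C"
  shows "sq_int f"
  unfolding sq_int_def
proof
  show "f \<in> borel_measurable M01" by fact
  show "integrable M01 (\<lambda>x. (f x)\<^sup>2)"
  proof (rule Bochner_Integration.integrable_bound)
    show "integrable M01 (\<lambda>x. C\<^sup>2)"
      using finite_measure.integrable_const[OF fin_M01] by simp
    show "(\<lambda>x. (f x)\<^sup>2) \<in> borel_measurable M01" using assms by simp
    show "AE x in M01. norm ((f x)\<^sup>2) \<le> norm (C\<^sup>2)"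
    proof (rule AE_I2)
      fix x assume "x \<in> space M01"
      then have "\<bar>f x\<bar> \<le> C" using assms by simp
      then have "\<bar>f x\<bar>^2 \<le> C^2"
        by (intro power_mono) auto
      then show "norm ((f x)\<^sup>2) \<le> norm (C\<^sup>2)"
        by simp
    qed
  qed
qed

lemma sq_int_zero: "sq_int (\<lambda>x. 0)"
  by (rule sq_int_bounded[where C=0]) auto

lemma sq_int_ae:
  assumes "sq_int f" "ae_eq f g"
  shows "sq_int g"
  unfolding sq_int_def
proof
  have m: "g \<in> borel_measurable M01"
    using meas_ae[of f g] assms by (simp add: sq_int_def ae_eq_def)
  then show "g \<in> borel_measurable M01" .
  show "integrable M01 (\<lambda>x. (g x)\<^sup>2)"
  proof -
    have "AE x in M01. (f x)\<^sup>2 = (g x)\<^sup>2"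
      using assms(2) by (auto simp: ae_eq_def elim!: eventually_mono)
    moreover have "(\<lambda>x. (f x)\<^sup>2) \<in> borel_measurable M01" "(\<lambda>x. (g x)\<^sup>2) \<in> borel_measurable M01"
      using m assms(1) by (auto simp: sq_int_def)
    ultimately show ?thesis
      using sq_int_sq[OF assms(1)] integrable_cong_AE[of "\<lambda>x. (f x)\<^sup>2" M01 "\<lambda>x. (g x)\<^sup>2"] by simp
  qed
qed


lemma l2_inner_commute: "l2_inner f g = l2_inner g f"
  by (simp add: l2_inner_def mult.commute)

lemma l2_inner_lin_left:
  assumes "sq_int f" "sq_int g" "sq_int h"
  shows "l2_inner (\<lambda>x. a * f x + b * g x) h = a * l2_inner f h + b * l2_inner g h"
proof -
  have "l2_inner (\<lambda>x. a * f x + b * g x) h = (LINT x|M01. a * (f x * h x) + b * (g x * h x))"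
    unfolding l2_inner_def by (simp add: algebra_simps)
  also have "\<dots> = a * l2_inner f h + b * l2_inner g h"
    unfolding l2_inner_def using sq_int_prod[OF assms(1,3)] sq_int_prod[OF assms(2,3)] by simp
  finally show ?thesis .
qed

lemma l2_inner_lin_right:
  assumes "sq_int f" "sq_int g" "sq_int h"
  shows "l2_inner h (\<lambda>x. a * f x + b * g x) = a * l2_inner h f + b * l2_inner h g"
  using l2_inner_lin_left[OF assms] by (simp add: l2_inner_commute)

lemma l2_inner_diff_left:
  assumes "sq_int f" "sq_int g" "sq_int h"
  shows "l2_inner (\<lambda>x. f x - g x) h = l2_inner f h - l2_inner g h"
  using l2_inner_lin_left[OF assms, of 1 "-1"] by simp

lemma l2_inner_diff_right:
  assumes "sq_int f" "sq_int g" "sq_int h"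
  shows "l2_inner h (\<lambda>x. f x - g x) = l2_inner h f - l2_inner h g"
  using l2_inner_lin_right[OF assms, of 1 "-1"] by simp

lemma l2_inner_add_left:
  assumes "sq_int f" "sq_int g" "sq_int h"
  shows "l2_inner (\<lambda>x. f x + g x) h = l2_inner f h + l2_inner g h"
  using l2_inner_lin_left[OF assms, of 1 1] by simp

lemma l2_inner_add_right:
  assumes "sq_int f" "sq_int g" "sq_int h"
  shows "l2_inner h (\<lambda>x. f x + g x) = l2_inner h f + l2_inner h g"
  using l2_inner_lin_right[OF assms, of 1 1] by simp

lemma l2_inner_cmult_left:
  "l2_inner (\<lambda>x. a * f x) h = a * l2_inner f h"
  unfolding l2_inner_def by (simp add: mult.assoc)

lemma l2_inner_cmult_right:
  "l2_inner h (\<lambda>x. a * f x) = a * l2_inner h f"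
  using l2_inner_cmult_left[of a f h] by (simp add: l2_inner_commute)

lemma l2_inner_self_nonneg: "0 \<le> l2_inner f f"
  unfolding l2_inner_def by (intro integral_nonneg_AE AE_I2) simp

lemma l2_norm_nonneg: "0 \<le> l2_norm f"
  using l2_inner_self_nonneg[of f] by (simp add: l2_norm_def)

lemma l2_norm_sq: "(l2_norm f)\<^sup>2 = l2_inner f f"
  by (simp add: l2_norm_def l2_inner_self_nonneg)

lemma l2_inner_ae:
  assumes "sq_int f" "sq_int g" "ae_eq f f'" "ae_eq g g'"
  shows "l2_inner f g = l2_inner f' g'"
proof -
  have "sq_int f'" "sq_int g'" using sq_int_ae assms by blast+
  then show ?thesis
    unfolding l2_inner_def
    using assms by (intro integral_cong_AE)
      (auto simp: ae_eq_def sq_int_def elim!: eventually_mono[OF eventually_conj] intro!: borel_measurable_times)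
qed

lemma l2_norm_ae:
  assumes "sq_int f" "ae_eq f f'"
  shows "l2_norm f = l2_norm f'"
  using l2_inner_ae[OF assms(1,1,2,2)] by (simp add: l2_norm_def)

lemma ae_eq_refl: "ae_eq f f"
  by (simp add: ae_eq_def)

lemma ae_eq_sym: "ae_eq f g \<Longrightarrow> ae_eq g f"
  by (auto simp: ae_eq_def elim!: eventually_mono)

lemma ae_eq_trans: "ae_eq f g \<Longrightarrow> ae_eq g h \<Longrightarrow> ae_eq f h"
  unfolding ae_eq_def by (auto elim: eventually_elim2)

lemma l2_self_zero:
  assumes "sq_int f" "l2_inner f f = 0"
  shows "ae_eq f (\<lambda>x. 0)"
proof -
  have "AE x in M01. (f x * f x) = 0"
    using assms integral_nonneg_eq_0_iff_AE[OF sq_int_prod[OF assms(1,1)]]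
    by (simp add: l2_inner_def)
  then show ?thesis by (simp add: ae_eq_def)
qed

lemma l2_norm_zero_ae:
  assumes "sq_int f" "l2_norm f = 0"
  shows "ae_eq f (\<lambda>x. 0)"
  using l2_self_zero[OF assms(1)] assms(2) l2_norm_sq[of f] by simp

lemma l2_inner_zero_ae:
  assumes "ae_eq f (\<lambda>x. 0)" "sq_int f" "sq_int g"
  shows "l2_inner f g = 0"
  using l2_inner_ae[OF assms(2,3) assms(1) ae_eq_refl] by (simp add: l2_inner_def)

lemma l2_CS:
  assumes "sq_int f" "sq_int g"
  shows "\<bar>l2_inner f g\<bar> \<le> l2_norm f * l2_norm g"
proof (cases "l2_inner g g = 0")
  case True
  then have "ae_eq g (\<lambda>x. 0)" using l2_self_zero assms by blast
  then have "l2_inner g f = 0" using l2_inner_zero_ae assms by blast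
  then show ?thesis by (simp add: l2_inner_commute l2_norm_nonneg)
next
  case False
  then have gp: "l2_inner g g > 0" using l2_inner_self_nonneg[of g] by simp
  define t where "t = l2_inner f g / l2_inner g g"
  have "0 \<le> l2_inner (\<lambda>x. f x - t * g x) (\<lambda>x. f x - t * g x)"
    by (rule l2_inner_self_nonneg)
  also have "\<dots> = l2_inner f f - 2 * t * l2_inner f g + t\<^sup>2 * l2_inner g g"
  proof -
    have s: "sq_int (\<lambda>x. t * g x)" using sq_int_cmult assms by blast
    have "l2_inner (\<lambda>x. f x - t * g x) (\<lambda>x. f x - t * g x)
       = l2_inner f (\<lambda>x. f x - t * g x) - l2_inner (\<lambda>x. t * g x) (\<lambda>x. f x - t * g x)"
      using l2_inner_diff_left[OF assms(1) s sq_int_diff[OF assms(1) s]] .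
    also have "\<dots> = (l2_inner f f - t * l2_inner f g) - t * (l2_inner g f - t * l2_inner g g)"
      using l2_inner_diff_right[OF assms(1) s assms(1)] l2_inner_diff_right[OF assms(1) s assms(2)]
      by (simp add: l2_inner_cmult_left l2_inner_cmult_right)
    finally show ?thesis by (simp add: l2_inner_commute[of g f] power2_eq_square algebra_simps)
  qed
  also have "\<dots> = l2_inner f f - (l2_inner f g)\<^sup>2 / l2_inner g g"
    using gp by (simp add: t_def power2_eq_square field_simps)
  finally have "(l2_inner f g)\<^sup>2 \<le> l2_inner f f * l2_inner g g"
    using gp by (simp add: field_simps)
  then have "(l2_inner f g)\<^sup>2 \<le> (l2_norm f * l2_norm g)\<^sup>2"
    by (simp add: power_mult_distrib l2_norm_sq)
  then show ?thesis
    using l2_norm_nonneg[of f] l2_norm_nonneg[of g] abs_le_square_iff[of "l2_inner f g" "l2_norm f * l2_norm g"]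
    by simp
qed

lemma l2_norm_add:
  assumes "sq_int f" "sq_int g"
  shows "l2_norm (\<lambda>x. f x + g x) \<le> l2_norm f + l2_norm g"
proof -
  have "(l2_norm (\<lambda>x. f x + g x))\<^sup>2 = l2_inner f f + 2 * l2_inner f g + l2_inner g g"
    using l2_inner_add_left[OF assms sq_int_add[OF assms]] l2_inner_add_right[OF assms assms(1)]
      l2_inner_add_right[OF assms assms(2)]
    by (simp add: l2_norm_sq l2_inner_commute[of g f])
  also have "\<dots> \<le> (l2_norm f)\<^sup>2 + 2 * (l2_norm f * l2_norm g) + (l2_norm g)\<^sup>2"
    using l2_CS[OF assms] by (simp add: l2_norm_sq)
  also have "\<dots> = (l2_norm f + l2_norm g)\<^sup>2"
    by (simp add: power2_eq_square algebra_simps)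
  finally show ?thesis
    using l2_norm_nonneg[of f] l2_norm_nonneg[of g] l2_norm_nonneg[of "\<lambda>x. f x + g x"]
    by (meson add_nonneg_nonneg power2_le_imp_le)
qed

lemma l2_norm_triangle:
  assumes "sq_int f" "sq_int g" "sq_int h"
  shows "l2_norm (\<lambda>x. f x - g x) \<le> l2_norm (\<lambda>x. f x - h x) + l2_norm (\<lambda>x. h x - g x)"
  using l2_norm_add[OF sq_int_diff[OF assms(1,3)] sq_int_diff[OF assms(3,2)]] by simp

lemma l2_norm_cmult: "l2_norm (\<lambda>x. a * f x) = \<bar>a\<bar> * l2_norm f"
proof -
  have "l2_inner (\<lambda>x. a * f x) (\<lambda>x. a * f x) = a\<^sup>2 * l2_inner f f"
    by (simp add: l2_inner_cmult_left l2_inner_cmult_right power2_eq_square)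
  then show ?thesis
    by (simp add: l2_norm_def real_sqrt_mult)
qed

lemma l2_norm_minus_commute: "l2_norm (\<lambda>x. f x - g x) = l2_norm (\<lambda>x. g x - f x)"
  using l2_norm_cmult[of "-1" "\<lambda>x. f x - g x"] by simp


lemma sq_int_abs: "sq_int f \<Longrightarrow> sq_int (\<lambda>x. \<bar>f x\<bar>)"
  unfolding sq_int_def by auto

lemma l2_norm_abs: "l2_norm (\<lambda>x. \<bar>f x\<bar>) = l2_norm f"
  unfolding l2_norm_def l2_inner_def by (simp add: abs_mult_self_eq)

lemma sq_int_const: "sq_int (\<lambda>x. c)"
  by (rule sq_int_bounded[where C="\<bar>c\<bar>"]) auto

lemma l2_norm_one: "l2_norm (\<lambda>x. 1) = 1"
  unfolding l2_norm_def l2_inner_def using measure_M01 by simp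

lemma L1_le_L2:
  assumes "sq_int f"
  shows "(LINT x|M01. \<bar>f x\<bar>) \<le> l2_norm f"
proof -
  have "(LINT x|M01. \<bar>f x\<bar>) = l2_inner (\<lambda>x. \<bar>f x\<bar>) (\<lambda>x. 1)"
    by (simp add: l2_inner_def)
  also have "\<dots> \<le> l2_norm (\<lambda>x. \<bar>f x\<bar>) * l2_norm (\<lambda>x. 1)"
    using l2_CS[OF sq_int_abs[OF assms] sq_int_const[of 1]] abs_le_D1 by blast
  finally show ?thesis by (simp add: l2_norm_abs l2_norm_one)
qed

lemma nn_sq_eq:
  assumes "sq_int f"
  shows "(\<integral>\<^sup>+x. ennreal ((f x)\<^sup>2) \<partial>M01) = ennreal ((l2_norm f)\<^sup>2)"
proof -
  have "(\<integral>\<^sup>+x. ennreal ((f x)\<^sup>2) \<partial>M01) = ennreal (LINT x|M01. (f x)\<^sup>2)"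
    using sq_int_sq[OF assms] by (intro nn_integral_eq_integral) auto
  then show ?thesis using l2_norm_sq[of f] by (simp add: l2_inner_def power2_eq_square)
qed

lemma telescope_bound:
  assumes p: "\<And>k. sq_int (p k)" and c: "\<And>k. l2_norm (\<lambda>x. p (Suc k) x - p k x) \<le> c k"
  shows "l2_norm (\<lambda>x. p (k + i) x - p k x) \<le> (\<Sum>j<i. c (j + k))"
proof (induction i)
  case 0
  then show ?case by (simp add: l2_norm_def l2_inner_def)
next
  case (Suc i)
  have "l2_norm (\<lambda>x. p (k + Suc i) x - p k x)
      = l2_norm (\<lambda>x. (p (Suc (k + i)) x - p (k + i) x) + (p (k + i) x - p k x))"
    by simp
  also have "\<dots> \<le> l2_norm (\<lambda>x. p (Suc (k + i)) x - p (k + i) x) + l2_norm (\<lambda>x. p (k + i) x - p k x)"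
    using l2_norm_add[OF sq_int_diff[OF p p] sq_int_diff[OF p p]] by blast
  also have "\<dots> \<le> c (i + k) + (\<Sum>j<i. c (j + k))"
    using c[of "k + i"] Suc by (simp add: add.commute)
  finally show ?case by (simp add: add.commute)
qed

lemma riesz_fischer:
  assumes p: "\<And>k. sq_int (p k)" and c: "\<And>k. l2_norm (\<lambda>x. p (Suc k) x - p k x) \<le> c k"
    and sc: "summable c"
  shows "\<exists>q. sq_int q \<and> (\<forall>k. l2_norm (\<lambda>x. q x - p k x) \<le> (\<Sum>j. c (j + k)))"
proof -
  have c0: "0 \<le> c k" for k using c[of k] l2_norm_nonneg order_trans by blast
  have pm[measurable]: "p k \<in> borel_measurable M01" for k using p sq_int_meas by blast
  define d where "d j x = \<bar>p (Suc j) x - p j x\<bar>" for j x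
  have dm: "d j \<in> borel_measurable M01" for j
    unfolding d_def by measurable
  have d1: "(\<integral>\<^sup>+x. ennreal (d j x) \<partial>M01) \<le> ennreal (c j)" for j
  proof -
    have "(\<integral>\<^sup>+x. ennreal (d j x) \<partial>M01) = ennreal (LINT x|M01. d j x)"
      unfolding d_def using sq_int_integrable[OF sq_int_diff[OF p p]]
      by (intro nn_integral_eq_integral) auto
    also have "\<dots> \<le> ennreal (c j)"
      using L1_le_L2[OF sq_int_diff[OF p p], of "Suc j" j] c[of j] unfolding d_def
      by (intro ennreal_leI) simp
    finally show ?thesis .
  qed
  have "(\<integral>\<^sup>+x. (\<Sum>j. ennreal (d j x)) \<partial>M01) = (\<Sum>j. \<integral>\<^sup>+x. ennreal (d j x) \<partial>M01)"
    using dm by (intro nn_integral_suminf) auto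
  also have "\<dots> \<le> (\<Sum>j. ennreal (c j))"
    using d1 by (intro suminf_le) auto
  also have "\<dots> = ennreal (\<Sum>j. c j)"
    using c0 sc by (simp add: suminf_ennreal2)
  finally have fin: "(\<integral>\<^sup>+x. (\<Sum>j. ennreal (d j x)) \<partial>M01) \<noteq> \<infinity>"
    using ennreal_less_top le_less_trans by (metis infinity_ennreal_def less_irrefl)
  have "AE x in M01. (\<Sum>j. ennreal (d j x)) \<noteq> \<infinity>"
    using dm by (intro nn_integral_PInf_AE fin) auto
  then have good: "AE x in M01. summable (\<lambda>j. d j x)"
    by (rule eventually_mono) (auto intro!: summable_suminf_not_top simp: d_def)
  define q where "q x = lim (\<lambda>m. p m x)" for x
  have qm: "q \<in> borel_measurable M01"
    unfolding q_def by measurable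
  have conv: "AE x in M01. (\<lambda>m. p m x) \<longlonglongrightarrow> q x"
  proof (rule eventually_mono[OF good])
    fix x assume "summable (\<lambda>j. d j x)"
    then have "summable (\<lambda>j. p (Suc j) x - p j x)"
      unfolding d_def by (rule summable_rabs_cancel)
    then have "(\<lambda>m. \<Sum>j<m. p (Suc j) x - p j x) \<longlonglongrightarrow> (\<Sum>j. p (Suc j) x - p j x)"
      by (rule summable_LIMSEQ)
    then have "(\<lambda>m. p 0 x + (\<Sum>j<m. p (Suc j) x - p j x)) \<longlonglongrightarrow> p 0 x + (\<Sum>j. p (Suc j) x - p j x)"
      by (intro tendsto_add tendsto_const)
    moreover have "p 0 x + (\<Sum>j<m. p (Suc j) x - p j x) = p m x" for m
      using sum_lessThan_telescope[of "\<lambda>j. p j x" m] by simp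
    ultimately have "convergent (\<lambda>m. p m x)"
      unfolding convergent_def by auto
    then show "(\<lambda>m. p m x) \<longlonglongrightarrow> q x"
      unfolding q_def by (simp add: convergent_LIMSEQ_iff)
  qed
  have main: "sq_int (\<lambda>x. q x - p k x) \<and> l2_norm (\<lambda>x. q x - p k x) \<le> (\<Sum>j. c (j + k))" for k
  proof -
    define T where "T = (\<Sum>j. c (j + k))"
    have sck: "summable (\<lambda>j. c (j + k))" using sc by (simp add: summable_iff_shift)
    have T0: "0 \<le> T" unfolding T_def using c0 sck by (simp add: suminf_nonneg)
    have bnd: "l2_norm (\<lambda>x. p (k + i) x - p k x) \<le> T" for i
      using telescope_bound[of p c k i, OF p c] sum_le_suminf[OF sck, of "{..<i}"] c0
      unfolding T_def by fastforce
    define u where "u m x = ennreal ((p m x - p k x)\<^sup>2)" for m x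
    have um: "u m \<in> borel_measurable M01" for m
      unfolding u_def by measurable
    have lim_u: "AE x in M01. liminf (\<lambda>m. u m x) = ennreal ((q x - p k x)\<^sup>2)"
    proof (rule eventually_mono[OF conv])
      fix x assume "(\<lambda>m. p m x) \<longlonglongrightarrow> q x"
      then have "(\<lambda>m. u m x) \<longlonglongrightarrow> ennreal ((q x - p k x)\<^sup>2)"
        unfolding u_def by (intro tendsto_ennrealI tendsto_intros)
      then show "liminf (\<lambda>m. u m x) = ennreal ((q x - p k x)\<^sup>2)"
        by (intro lim_imp_Liminf) auto
    qed
    have ev: "eventually (\<lambda>m. integral\<^sup>N M01 (u m) \<le> ennreal (T\<^sup>2)) sequentially"
      unfolding eventually_sequentially
    proof (intro exI allI impI)
      fix m assume "k \<le> m"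
      then obtain i where m: "m = k + i" using le_Suc_ex by blast
      have "integral\<^sup>N M01 (u m) = ennreal ((l2_norm (\<lambda>x. p m x - p k x))\<^sup>2)"
        unfolding u_def using nn_sq_eq[OF sq_int_diff[OF p p], of m k] by simp
      also have "\<dots> \<le> ennreal (T\<^sup>2)"
        using bnd[of i] l2_norm_nonneg unfolding m by (intro ennreal_leI power_mono) auto
      finally show "integral\<^sup>N M01 (u m) \<le> ennreal (T\<^sup>2)" .
    qed
    have "(\<integral>\<^sup>+x. ennreal ((q x - p k x)\<^sup>2) \<partial>M01) = (\<integral>\<^sup>+x. liminf (\<lambda>m. u m x) \<partial>M01)"
      using lim_u by (intro nn_integral_cong_AE) (auto elim!: eventually_mono)
    also have "\<dots> \<le> liminf (\<lambda>m. integral\<^sup>N M01 (u m))"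
      using um by (rule nn_integral_liminf)
    also have "\<dots> \<le> limsup (\<lambda>m. integral\<^sup>N M01 (u m))"
      by (rule Liminf_le_Limsup) simp
    also have "\<dots> \<le> ennreal (T\<^sup>2)"
      using ev by (rule Limsup_bounded)
    finally have nnb: "(\<integral>\<^sup>+x. ennreal ((q x - p k x)\<^sup>2) \<partial>M01) \<le> ennreal (T\<^sup>2)" .
    have dm2: "(\<lambda>x. (q x - p k x)\<^sup>2) \<in> borel_measurable M01"
      using qm by measurable
    have "(\<integral>\<^sup>+x. ennreal ((q x - p k x)\<^sup>2) \<partial>M01) < top"
      using nnb ennreal_less_top by (rule le_less_trans)
    then obtain r where r: "(\<integral>\<^sup>+x. ennreal ((q x - p k x)\<^sup>2) \<partial>M01) = ennreal r" "0 \<le> r"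
      unfolding less_top_ennreal by blast
    have int2: "integrable M01 (\<lambda>x. (q x - p k x)\<^sup>2)"
      using dm2 r by (intro integrableI_nn_integral_finite) auto
    have sqi: "sq_int (\<lambda>x. q x - p k x)"
      unfolding sq_int_def using int2 qm p by (auto simp: sq_int_def)
    have "ennreal ((l2_norm (\<lambda>x. q x - p k x))\<^sup>2) \<le> ennreal (T\<^sup>2)"
      using nn_sq_eq[OF sqi] nnb by simp
    then have "(l2_norm (\<lambda>x. q x - p k x))\<^sup>2 \<le> T\<^sup>2"
      using T0 by (simp add: ennreal_le_iff)
    then have "l2_norm (\<lambda>x. q x - p k x) \<le> T"
      using T0 l2_norm_nonneg power2_le_imp_le by blast
    then show ?thesis using sqi T_def by simp
  qed
  have "sq_int q"
  proof -
    have "sq_int (\<lambda>x. (q x - p 0 x) + p 0 x)"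
      using main[of 0] p[of 0] by (intro sq_int_add) auto
    then show ?thesis by simp
  qed
  then show ?thesis using main by blast
qed


lemma l2_norm_diff_sq:
  assumes "sq_int a" "sq_int b"
  shows "(l2_norm (\<lambda>x. a x - b x))\<^sup>2 = (l2_norm a)\<^sup>2 - 2 * l2_inner a b + (l2_norm b)\<^sup>2"
proof -
  have "l2_inner (\<lambda>x. a x - b x) (\<lambda>x. a x - b x) = l2_inner a (\<lambda>x. a x - b x) - l2_inner b (\<lambda>x. a x - b x)"
    using l2_inner_diff_left[OF assms sq_int_diff[OF assms]] .
  also have "\<dots> = (l2_inner a a - l2_inner a b) - (l2_inner b a - l2_inner b b)"
    using l2_inner_diff_right[OF assms assms(1)] l2_inner_diff_right[OF assms assms(2)] by simp
  finally show ?thesis by (simp add: l2_norm_sq l2_inner_commute[of b a])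
qed

lemma l2_norm_add_sq:
  assumes "sq_int a" "sq_int b"
  shows "(l2_norm (\<lambda>x. a x + b x))\<^sup>2 = (l2_norm a)\<^sup>2 + 2 * l2_inner a b + (l2_norm b)\<^sup>2"
proof -
  have "l2_inner (\<lambda>x. a x + b x) (\<lambda>x. a x + b x) = l2_inner a (\<lambda>x. a x + b x) + l2_inner b (\<lambda>x. a x + b x)"
    using l2_inner_add_left[OF assms sq_int_add[OF assms]] .
  also have "\<dots> = (l2_inner a a + l2_inner a b) + (l2_inner b a + l2_inner b b)"
    using l2_inner_add_right[OF assms assms(1)] l2_inner_add_right[OF assms assms(2)] by simp
  finally show ?thesis by (simp add: l2_norm_sq l2_inner_commute[of b a])
qed

lemma parallelogram:
  assumes "sq_int a" "sq_int b"
  shows "(l2_norm (\<lambda>x. a x - b x))\<^sup>2 = 2 * (l2_norm a)\<^sup>2 + 2 * (l2_norm b)\<^sup>2 - (l2_norm (\<lambda>x. a x + b x))\<^sup>2"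
  using l2_norm_diff_sq[OF assms] l2_norm_add_sq[OF assms] by simp

lemma aux_lin: "(C::real) = 2*A + 2*B - 4*m \<Longrightarrow> d \<le> m \<Longrightarrow> C \<le> 2*(B - d) + 2*(A - d)"
  by argo

definition "l2_subspace S \<longleftrightarrow> S \<subseteq> {f. sq_int f} \<and> (\<lambda>x. 0) \<in> S \<and>
   (\<forall>f\<in>S. \<forall>g\<in>S. \<forall>a b. (\<lambda>x. a * f x + b * g x) \<in> S) \<and>
   (\<forall>f. sq_int f \<and> (\<forall>e>0. \<exists>s\<in>S. l2_norm (\<lambda>x. f x - s x) < e) \<longrightarrow> f \<in> S)"

lemma proj_exists:
  assumes S: "l2_subspace S" and f: "sq_int f"
  shows "\<exists>p\<in>S. \<forall>v\<in>S. l2_inner (\<lambda>x. f x - p x) v = 0"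
proof -
  have Ssq: "s \<in> S \<Longrightarrow> sq_int s" for s using S by (auto simp: l2_subspace_def)
  have Slin: "s \<in> S \<Longrightarrow> t \<in> S \<Longrightarrow> (\<lambda>x. a * s x + b * t x) \<in> S" for s t a b
    using S by (auto simp: l2_subspace_def)
  have S0: "(\<lambda>x. 0) \<in> S" using S by (auto simp: l2_subspace_def)
  have Scl: "sq_int g \<Longrightarrow> (\<And>e. e > 0 \<Longrightarrow> \<exists>s\<in>S. l2_norm (\<lambda>x. g x - s x) < e) \<Longrightarrow> g \<in> S" for g
    using S unfolding l2_subspace_def by blast
  define Q where "Q = (\<lambda>s. (l2_norm (\<lambda>x. f x - s x))\<^sup>2) ` S"
  define d where "d = Inf Q"
  have Qne: "Q \<noteq> {}" using S0 Q_def by auto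
  have Qbdd: "bdd_below Q" unfolding Q_def by (intro bdd_belowI[where m=0]) auto
  have dle: "s \<in> S \<Longrightarrow> d \<le> (l2_norm (\<lambda>x. f x - s x))\<^sup>2" for s
    unfolding d_def Q_def using Qbdd Q_def by (intro cInf_lower) auto
  have d0: "0 \<le> d" unfolding d_def using Qne by (intro cInf_greatest) (auto simp: Q_def)
  have approx: "\<exists>s\<in>S. (l2_norm (\<lambda>x. f x - s x))\<^sup>2 < d + e" if "e > 0" for e
  proof -
    have "d < d + e" using that by simp
    then obtain y where "y \<in> Q" "y < d + e" unfolding d_def using cInf_lessD[OF Qne] by blast
    then show ?thesis unfolding Q_def by auto
  qed
  define p where "p k = (SOME s. s \<in> S \<and> (l2_norm (\<lambda>x. f x - s x))\<^sup>2 < d + (1/4)^k)" for k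
  have pS: "p k \<in> S" and pd: "(l2_norm (\<lambda>x. f x - p k x))\<^sup>2 < d + (1/4)^k" for k
  proof -
    have "\<exists>s. s \<in> S \<and> (l2_norm (\<lambda>x. f x - s x))\<^sup>2 < d + (1/4)^k"
      using approx[of "(1/4)^k"] by auto
    from someI_ex[OF this] show "p k \<in> S" "(l2_norm (\<lambda>x. f x - p k x))\<^sup>2 < d + (1/4)^k"
      unfolding p_def by auto
  qed
  have psq: "sq_int (p k)" for k using Ssq pS by blast
  have pair: "(l2_norm (\<lambda>x. s x - t x))\<^sup>2 \<le> 2 * ((l2_norm (\<lambda>x. f x - s x))\<^sup>2 - d) + 2 * ((l2_norm (\<lambda>x. f x - t x))\<^sup>2 - d)"
    if "s \<in> S" "t \<in> S" for s t
  proof -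
    have ss: "sq_int s" "sq_int t" using that Ssq by auto
    have a: "sq_int (\<lambda>x. f x - s x)" "sq_int (\<lambda>x. f x - t x)" using ss f sq_int_diff by auto
    have "(l2_norm (\<lambda>x. s x - t x))\<^sup>2 = (l2_norm (\<lambda>x. (f x - t x) - (f x - s x)))\<^sup>2"
      by simp
    also have "\<dots> = 2 * (l2_norm (\<lambda>x. f x - t x))\<^sup>2 + 2 * (l2_norm (\<lambda>x. f x - s x))\<^sup>2
        - (l2_norm (\<lambda>x. (f x - t x) + (f x - s x)))\<^sup>2"
      by (rule parallelogram[OF a(2) a(1)])
    also have "(l2_norm (\<lambda>x. (f x - t x) + (f x - s x)))\<^sup>2 = 4 * (l2_norm (\<lambda>x. f x - ((1/2) * s x + (1/2) * t x)))\<^sup>2"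
    proof -
      have eq: "(\<lambda>x. (f x - t x) + (f x - s x)) = (\<lambda>x. 2 * (f x - ((1/2) * s x + (1/2) * t x)))"
        by (auto simp: algebra_simps)
      have n2: "l2_norm (\<lambda>x. 2 * (f x - ((1/2) * s x + (1/2) * t x))) = 2 * l2_norm (\<lambda>x. f x - ((1/2) * s x + (1/2) * t x))"
        by (rule l2_norm_cmult[of 2, simplified])
      show ?thesis unfolding eq n2 by (simp add: power_mult_distrib)
    qed
    finally have e1: "(l2_norm (\<lambda>x. s x - t x))\<^sup>2 = 2 * (l2_norm (\<lambda>x. f x - t x))\<^sup>2 + 2 * (l2_norm (\<lambda>x. f x - s x))\<^sup>2 - 4 * (l2_norm (\<lambda>x. f x - ((1/2) * s x + (1/2) * t x)))\<^sup>2" .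
    have e2: "d \<le> (l2_norm (\<lambda>x. f x - ((1/2) * s x + (1/2) * t x)))\<^sup>2"
      using dle Slin that by blast
    show ?thesis using aux_lin[OF e1 e2] .
  qed
  define c where "c k = 2 * (1/2::real)^k" for k
  have step: "l2_norm (\<lambda>x. p (Suc k) x - p k x) \<le> c k" for k
  proof -
    have "(l2_norm (\<lambda>x. p (Suc k) x - p k x))\<^sup>2 \<le> 2 * (1/4)^(Suc k) + 2 * (1/4)^k"
      using pair[OF pS pS, of "Suc k" k] pd[of k] pd[of "Suc k"] by argo
    also have "\<dots> \<le> (c k)\<^sup>2"
    proof -
      have "(c k)\<^sup>2 = 4 * ((1/2::real)^k * (1/2)^k)" unfolding c_def by (simp add: power2_eq_square)
      also have "\<dots> = 4 * (1/4::real)^k" by (simp add: power_mult_distrib[symmetric])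
      finally have "(c k)\<^sup>2 = 4 * (1/4::real)^k" .
      moreover have "2 * (1/4::real)^(Suc k) + 2 * (1/4)^k = (5/2) * (1/4)^k" by simp
      moreover have "(5/2) * (1/4::real)^k \<le> 4 * (1/4)^k" by simp
      ultimately show ?thesis by simp
    qed
    finally show ?thesis
      using power2_le_imp_le[of _ "c k"] by (simp add: c_def)
  qed
  have sc: "summable c" unfolding c_def by (intro summable_mult summable_geometric) simp
  obtain q where q: "sq_int q" and qb: "\<And>k. l2_norm (\<lambda>x. q x - p k x) \<le> (\<Sum>j. c (j + k))"
    using riesz_fischer[of p c, OF psq step sc] by blast
  have csum: "(\<Sum>j. c (j + k)) = 4 * (1/2)^k" for k
  proof -
    have "(\<Sum>j. c (j + k)) = (\<Sum>j. (2 * (1/2)^k) * (1/2::real)^j)"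
      unfolding c_def by (simp add: power_add algebra_simps)
    also have "\<dots> = (2 * (1/2)^k) * (\<Sum>j. (1/2::real)^j)"
      by (intro suminf_mult summable_geometric) simp
    also have "\<dots> = 4 * (1/2)^k" using suminf_geometric[of "1/2::real"] by simp
    finally show ?thesis .
  qed
  have qS: "q \<in> S"
  proof (rule Scl[OF q])
    fix e :: real assume "e > 0"
    obtain k where "(1/2::real)^k < e / 4"
      using real_arch_pow_inv[of "e/4" "1/2"] \<open>e > 0\<close> by auto
    then have "l2_norm (\<lambda>x. q x - p k x) < e" using qb[of k] csum[of k] by simp
    then show "\<exists>s\<in>S. l2_norm (\<lambda>x. q x - s x) < e" using pS by blast
  qed
  have qd: "(l2_norm (\<lambda>x. f x - q x))\<^sup>2 = d"
  proof -
    have ub: "l2_norm (\<lambda>x. f x - q x) \<le> sqrt (d + (1/4)^k) + 4 * (1/2)^k" for k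
    proof -
      have "l2_norm (\<lambda>x. f x - q x) \<le> l2_norm (\<lambda>x. f x - p k x) + l2_norm (\<lambda>x. p k x - q x)"
        by (rule l2_norm_triangle[OF f q psq])
      also have "l2_norm (\<lambda>x. f x - p k x) \<le> sqrt (d + (1/4)^k)"
        using pd[of k] l2_norm_nonneg real_le_rsqrt by (simp add: less_imp_le real_le_rsqrt)
      also have "l2_norm (\<lambda>x. p k x - q x) \<le> 4 * (1/2)^k"
        using qb[of k] csum[of k] l2_norm_minus_commute[of "p k" q] by simp
      finally show ?thesis by simp
    qed
    have "(\<lambda>k. sqrt (d + (1/4)^k) + 4 * (1/2::real)^k) \<longlonglongrightarrow> sqrt (d + 0) + 4 * 0"
      by (intro tendsto_intros LIMSEQ_power_zero) auto
    then have "l2_norm (\<lambda>x. f x - q x) \<le> sqrt d"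
      using ub by (intro LIMSEQ_le_const[of _ "sqrt d"]) (auto intro: exI[of _ 0])
    then have "(l2_norm (\<lambda>x. f x - q x))\<^sup>2 \<le> d"
      using d0 l2_norm_nonneg by (metis power_mono real_sqrt_pow2)
    then show ?thesis using dle[OF qS] by simp
  qed
  have orth: "l2_inner (\<lambda>x. f x - q x) v = 0" if v: "v \<in> S" for v
  proof -
    have vs: "sq_int v" using v Ssq by blast
    have a: "sq_int (\<lambda>x. f x - q x)" using f q sq_int_diff by blast
    define r where "r = l2_inner (\<lambda>x. f x - q x) v"
    define n where "n = (l2_norm v)\<^sup>2"
    have n0: "0 \<le> n" by (simp add: n_def)
    define e where "e = 1 / (n + 1)"
    have e0: "0 < e" using n0 by (simp add: e_def)
    have en: "e * n < 1" using n0 by (simp add: e_def)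
    define t where "t = e * r"
    have "(\<lambda>x. 1 * q x + t * v x) \<in> S" using Slin qS v by blast
    then have "d \<le> (l2_norm (\<lambda>x. f x - (1 * q x + t * v x)))\<^sup>2" by (rule dle)
    also have "(\<lambda>x. f x - (1 * q x + t * v x)) = (\<lambda>x. (f x - q x) - t * v x)"
      by (auto simp: algebra_simps)
    also have "(l2_norm (\<lambda>x. (f x - q x) - t * v x))\<^sup>2 = d - 2 * t * r + t\<^sup>2 * n"
      using l2_norm_diff_sq[OF a sq_int_cmult[OF vs, of t]] qd
      by (simp add: l2_inner_cmult_right l2_norm_cmult r_def n_def power_mult_distrib)
    finally have H: "2 * t * r \<le> t\<^sup>2 * n" by simp
    show ?thesis
    proof (rule ccontr)
      assume "l2_inner (\<lambda>x. f x - q x) v \<noteq> 0"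
      then have rr: "0 < r * r" unfolding r_def using not_real_square_gt_zero by blast
      have "(2 * e) * (r * r) \<le> (e * e * n) * (r * r)"
        using H by (simp add: t_def power2_eq_square algebra_simps)
      then have "2 * e \<le> e * e * n" using rr mult_le_cancel_right_pos by blast
      then have "2 \<le> e * n" using e0 by (simp add: algebra_simps)
      then show False using en by simp
    qed
  qed
  show ?thesis using qS orth by blast
qed


lemma mem_lin_span: "s \<in> lin_span U \<longleftrightarrow> (\<exists>(k::nat) cs gs. s = (\<lambda>x. \<Sum>i<k. cs i * gs i x) \<and> (\<forall>i<k. gs i \<in> U))"
  unfolding lin_span_def by blast

lemma span_zero: "(\<lambda>x. 0) \<in> lin_span U"
  unfolding lin_span_def by (rule CollectI, rule exI[of _ 0]) auto

lemma span_snoc: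
  assumes "s \<in> lin_span U" "g \<in> U"
  shows "(\<lambda>x. s x + c * g x) \<in> lin_span U"
proof -
  obtain k :: nat and cs gs where s: "s = (\<lambda>x. \<Sum>i<k. cs i * gs i x)" "\<forall>i<k. gs i \<in> U"
    using assms(1) unfolding mem_lin_span by blast
  define cs' where "cs' = cs(k := c)"
  define gs' where "gs' = gs(k := g)"
  have "(\<lambda>x. s x + c * g x) = (\<lambda>x. \<Sum>i<Suc k. cs' i * gs' i x)"
    unfolding s cs'_def gs'_def by (auto intro!: sum.cong)
  moreover have "\<forall>i<Suc k. gs' i \<in> U" using s assms(2) by (auto simp: gs'_def less_Suc_eq)
  ultimately show ?thesis unfolding lin_span_def by blast
qed

lemma span_scale:
  assumes "s \<in> lin_span U"
  shows "(\<lambda>x. a * s x) \<in> lin_span U"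
proof -
  obtain k :: nat and cs gs where s: "s = (\<lambda>x. \<Sum>i<k. cs i * gs i x)" "\<forall>i<k. gs i \<in> U"
    using assms(1) unfolding mem_lin_span by blast
  have "(\<lambda>x. a * s x) = (\<lambda>x. \<Sum>i<k. (a * cs i) * gs i x)"
    unfolding s by (auto simp: sum_distrib_left mult.assoc)
  then show ?thesis using s unfolding mem_lin_span
    by (intro exI[of _ k] exI[of _ "\<lambda>i. a * cs i"] exI[of _ gs]) auto
qed

lemma span_add:
  assumes "s \<in> lin_span U" "t \<in> lin_span U"
  shows "(\<lambda>x. s x + t x) \<in> lin_span U"
proof -
  obtain k :: nat and cs gs where t: "t = (\<lambda>x. \<Sum>i<k. cs i * gs i x)" "\<forall>i<k. gs i \<in> U"
    using assms(2) unfolding mem_lin_span by blast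
  have "(\<lambda>x. s x + (\<Sum>i<m. cs i * gs i x)) \<in> lin_span U" if "m \<le> k" for m
    using that
  proof (induction m)
    case 0
    then show ?case using assms(1) by simp
  next
    case (Suc m)
    then have "(\<lambda>x. (s x + (\<Sum>i<m. cs i * gs i x)) + cs m * gs m x) \<in> lin_span U"
      using t(2) by (intro span_snoc) auto
    then show ?case by (simp add: add.assoc)
  qed
  then show ?thesis unfolding t by simp
qed

lemma span_lin:
  assumes "s \<in> lin_span U" "t \<in> lin_span U"
  shows "(\<lambda>x. a * s x + b * t x) \<in> lin_span U"
  using span_add[OF span_scale[OF assms(1)] span_scale[OF assms(2)]] .

lemma span_mono: "U \<subseteq> V \<Longrightarrow> lin_span U \<subseteq> lin_span V"
  unfolding lin_span_def by blast

lemma span_induct_gen: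
  assumes "s \<in> lin_span U" "P (\<lambda>x. 0)"
    "\<And>s g c. P s \<Longrightarrow> g \<in> U \<Longrightarrow> P (\<lambda>x. s x + c * g x)"
  shows "P s"
proof -
  obtain k :: nat and cs gs where s: "s = (\<lambda>x. \<Sum>i<k. cs i * gs i x)" "\<forall>i<k. gs i \<in> U"
    using assms(1) unfolding mem_lin_span by blast
  have "P (\<lambda>x. \<Sum>i<m. cs i * gs i x)" if "m \<le> k" for m
    using that
  proof (induction m)
    case 0 then show ?case using assms(2) by simp
  next
    case (Suc m)
    then have "P (\<lambda>x. (\<Sum>i<m. cs i * gs i x) + cs m * gs m x)"
      using s(2) by (intro assms(3)) auto
    then show ?case by simp
  qed
  then show ?thesis using s by simp
qed

lemma span_sq: "U \<subseteq> {f. sq_int f} \<Longrightarrow> s \<in> lin_span U \<Longrightarrow> sq_int s"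
proof -
  assume U: "U \<subseteq> {f. sq_int f}" and s: "s \<in> lin_span U"
  show "sq_int s"
    using s
  proof (rule span_induct_gen)
    show "sq_int (\<lambda>x. 0)" by (rule sq_int_zero)
    fix s g c assume "sq_int s" "g \<in> U"
    then show "sq_int (\<lambda>x. s x + c * g x)" using U sq_int_add sq_int_cmult by blast
  qed
qed

lemma sa_D: "self_adjoint_op D L \<Longrightarrow> f \<in> D \<Longrightarrow> sq_int f"
  unfolding self_adjoint_op_def by blast

lemma sa_L: "self_adjoint_op D L \<Longrightarrow> f \<in> D \<Longrightarrow> sq_int (L f)"
  unfolding self_adjoint_op_def by blast

lemma sa_lin: "self_adjoint_op D L \<Longrightarrow> f \<in> D \<Longrightarrow> g \<in> D \<Longrightarrow> (\<lambda>x. a * f x + b * g x) \<in> D"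
  unfolding self_adjoint_op_def by blast

lemma sa_Llin: "self_adjoint_op D L \<Longrightarrow> f \<in> D \<Longrightarrow> g \<in> D \<Longrightarrow>
    ae_eq (L (\<lambda>x. a * f x + b * g x)) (\<lambda>x. a * L f x + b * L g x)"
  unfolding self_adjoint_op_def by blast

lemma sa_dense: "self_adjoint_op D L \<Longrightarrow> sq_int f \<Longrightarrow> e > 0 \<Longrightarrow> \<exists>g\<in>D. l2_norm (\<lambda>x. f x - g x) < e"
  unfolding self_adjoint_op_def by blast

lemma sa_sym: "self_adjoint_op D L \<Longrightarrow> f \<in> D \<Longrightarrow> g \<in> D \<Longrightarrow> l2_inner (L f) g = l2_inner f (L g)"
  unfolding self_adjoint_op_def by blast

lemma sa_zero: "self_adjoint_op D L \<Longrightarrow> (\<lambda>x. 0) \<in> D"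
proof -
  assume sa: "self_adjoint_op D L"
  obtain g where "g \<in> D" using sa_dense[OF sa sq_int_zero, of 1] by auto
  then have "(\<lambda>x. 0 * g x + 0 * g x) \<in> D" using sa_lin[OF sa] by blast
  then show ?thesis by simp
qed

lemma ortho_dense:
  assumes sa: "self_adjoint_op D L" and u: "sq_int u" and o: "\<And>w. w \<in> D \<Longrightarrow> l2_inner u w = 0"
  shows "ae_eq u (\<lambda>x. 0)"
proof -
  have "l2_norm u \<le> e" if e0: "e > 0" for e
  proof -
    obtain w where w: "w \<in> D" "l2_norm (\<lambda>x. u x - w x) < e" using sa_dense[OF sa u e0] by blast
    have ws: "sq_int w" using sa_D[OF sa w(1)] .
    have "(l2_norm u)\<^sup>2 = l2_inner u u" by (rule l2_norm_sq)
    also have "\<dots> = l2_inner u (\<lambda>x. u x - w x) + l2_inner u w"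
      using l2_inner_diff_right[OF u ws u] by simp
    also have "\<dots> = l2_inner u (\<lambda>x. u x - w x)" using o[OF w(1)] by simp
    also have "\<dots> \<le> l2_norm u * l2_norm (\<lambda>x. u x - w x)"
      using l2_CS[OF u sq_int_diff[OF u ws]] by simp
    also have "\<dots> \<le> l2_norm u * e"
      using w(2) l2_norm_nonneg by (simp add: mult_left_mono)
    finally have "l2_norm u * l2_norm u \<le> l2_norm u * e" by (simp add: power2_eq_square)
    then show ?thesis using l2_norm_nonneg[of u]
      by (metis less_eq_real_def mult_le_cancel_left_pos e0)
  qed
  then have "l2_norm u \<le> 0" by (meson dense not_le)
  then have "l2_norm u = 0" using l2_norm_nonneg[of u] by simp
  then show ?thesis by (rule l2_norm_zero_ae[OF u])
qed

lemma L_ae: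
  assumes sa: "self_adjoint_op D L" and ab: "a \<in> D" "b \<in> D" "ae_eq a b"
  shows "ae_eq (L a) (L b)"
proof -
  have u: "sq_int (\<lambda>x. L a x - L b x)" using sa_L[OF sa] ab sq_int_diff by blast
  have "ae_eq (\<lambda>x. L a x - L b x) (\<lambda>x. 0)"
  proof (rule ortho_dense[OF sa u])
    fix w assume w: "w \<in> D"
    have "l2_inner (\<lambda>x. L a x - L b x) w = l2_inner (L a) w - l2_inner (L b) w"
      using l2_inner_diff_left sa_L[OF sa] sa_D[OF sa] ab w by blast
    also have "\<dots> = l2_inner a (L w) - l2_inner b (L w)"
      using sa_sym[OF sa] ab w by simp
    also have "l2_inner a (L w) = l2_inner b (L w)"
      using l2_inner_ae[OF sa_D[OF sa ab(1)] sa_L[OF sa w] ab(3) ae_eq_refl] .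
    finally show "l2_inner (\<lambda>x. L a x - L b x) w = 0" by simp
  qed
  then show ?thesis by (auto simp: ae_eq_def elim!: eventually_mono)
qed

definition "EU D L lam = \<Union>{eigenspace_op D L \<mu> | \<mu>. \<bar>\<mu>\<bar> \<le> lam}"

lemma PW_EU: "PW_space D L lam = l2_closure (lin_span (EU D L lam))"
  by (simp add: PW_space_def EU_def)

lemma EU_D: "EU D L lam \<subseteq> D"
  by (auto simp: EU_def eigenspace_op_def)

lemma EU_mono: "lam \<le> mu \<Longrightarrow> EU D L lam \<subseteq> EU D L mu"
proof
  fix x assume "lam \<le> mu" "x \<in> EU D L lam"
  then obtain m where "x \<in> eigenspace_op D L m" "\<bar>m\<bar> \<le> lam" by (auto simp: EU_def)
  then show "x \<in> EU D L mu" using \<open>lam \<le> mu\<close> unfolding EU_def by force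
qed

lemma span_D:
  assumes sa: "self_adjoint_op D L" "U \<subseteq> D" "s \<in> lin_span U"
  shows "s \<in> D"
  using assms(3)
  by (rule span_induct_gen) (use sa sa_zero sa_lin[of D L _ _ 1, simplified] in auto)

lemma L_span:
  assumes sa: "self_adjoint_op D L" and s: "s \<in> lin_span (EU D L lam)"
  shows "s \<in> D \<and> (\<exists>s'\<in>lin_span (EU D L lam). ae_eq (L s) s')"
  using s
proof (rule span_induct_gen)
  show "(\<lambda>x. 0) \<in> D \<and> (\<exists>s'\<in>lin_span (EU D L lam). ae_eq (L (\<lambda>x. 0)) s')"
  proof -
    have "ae_eq (L (\<lambda>x. 0 * 0 + 0 * 0)) (\<lambda>x. 0 * L (\<lambda>x. 0) x + 0 * L (\<lambda>x. 0) x)"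
      using sa_Llin[OF sa sa_zero[OF sa] sa_zero[OF sa], of 0 0] by simp
    then show ?thesis using span_zero sa_zero[OF sa] by auto
  qed
next
  fix s g c
  assume IH: "s \<in> D \<and> (\<exists>s'\<in>lin_span (EU D L lam). ae_eq (L s) s')" and g: "g \<in> EU D L lam"
  obtain s' where s': "s' \<in> lin_span (EU D L lam)" "ae_eq (L s) s'" using IH by blast
  have sD: "s \<in> D" using IH by blast
  obtain \<mu> where mu: "g \<in> D" "ae_eq (L g) (\<lambda>x. \<mu> * g x)"
    using g by (auto simp: EU_def eigenspace_op_def)
  have "(\<lambda>x. 1 * s x + c * g x) \<in> D" using sa_lin[OF sa sD mu(1)] .
  then have D1: "(\<lambda>x. s x + c * g x) \<in> D" by simp
  have "ae_eq (L (\<lambda>x. 1 * s x + c * g x)) (\<lambda>x. 1 * L s x + c * L g x)"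
    using sa_Llin[OF sa sD mu(1)] .
  then have a1: "ae_eq (L (\<lambda>x. s x + c * g x)) (\<lambda>x. L s x + c * L g x)" by simp
  have a2: "ae_eq (\<lambda>x. L s x + c * L g x) (\<lambda>x. s' x + (c * \<mu>) * g x)"
    using s'(2) mu(2) unfolding ae_eq_def by (auto elim: eventually_elim2)
  have "(\<lambda>x. s' x + (c * \<mu>) * g x) \<in> lin_span (EU D L lam)"
    using span_snoc[OF s'(1) g] .
  then show "(\<lambda>x. s x + c * g x) \<in> D \<and> (\<exists>s'\<in>lin_span (EU D L lam). ae_eq (L (\<lambda>x. s x + c * g x)) s')"
    using D1 ae_eq_trans[OF a1 a2] by blast
qed

lemma EU_sq: "self_adjoint_op D L \<Longrightarrow> EU D L lam \<subseteq> {f. sq_int f}"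
  using EU_D sa_D by blast

lemma PW_sq: "f \<in> PW_space D L lam \<Longrightarrow> sq_int f"
  by (simp add: PW_space_def l2_closure_def)

lemma span_in_PW:
  assumes sa: "self_adjoint_op D L" and s: "s \<in> lin_span (EU D L lam)"
  shows "s \<in> PW_space D L lam"
proof -
  have "sq_int s" using span_sq[OF EU_sq[OF sa] s] .
  moreover have "l2_norm (\<lambda>x. s x - s x) = 0" by (simp add: l2_norm_def l2_inner_def)
  ultimately show ?thesis unfolding PW_EU l2_closure_def using s by (auto intro!: bexI[of _ s])
qed

lemma PW_subspace:
  assumes sa: "self_adjoint_op D L"
  shows "l2_subspace (PW_space D L lam)"
  unfolding l2_subspace_def
proof (intro conjI ballI allI impI)
  show "PW_space D L lam \<subseteq> {f. sq_int f}" using PW_sq by blast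
  show "(\<lambda>x. 0) \<in> PW_space D L lam" using span_in_PW[OF sa span_zero] .
next
  fix f g a b assume f: "f \<in> PW_space D L lam" and g: "g \<in> PW_space D L lam"
  have fs: "sq_int f" and gs: "sq_int g" using f g PW_sq by auto
  show "(\<lambda>x. a * f x + b * g x) \<in> PW_space D L lam"
    unfolding PW_EU l2_closure_def
  proof (intro CollectI conjI allI impI)
    show "sq_int (\<lambda>x. a * f x + b * g x)" using sq_int_lin[OF fs gs] .
    fix e :: real assume e: "e > 0"
    define e' where "e' = e / (2 * (\<bar>a\<bar> + \<bar>b\<bar> + 1))"
    have e'0: "e' > 0" using e by (simp add: e'_def add_pos_nonneg)
    obtain s where s: "s \<in> lin_span (EU D L lam)" "l2_norm (\<lambda>x. f x - s x) < e'"
      using f e'0 unfolding PW_EU l2_closure_def by blast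
    obtain t where t: "t \<in> lin_span (EU D L lam)" "l2_norm (\<lambda>x. g x - t x) < e'"
      using g e'0 unfolding PW_EU l2_closure_def by blast
    have ss: "sq_int s" "sq_int t" using span_sq[OF EU_sq[OF sa]] s t by auto
    have "l2_norm (\<lambda>x. (a * f x + b * g x) - (a * s x + b * t x))
        = l2_norm (\<lambda>x. a * (f x - s x) + b * (g x - t x))"
      by (simp add: algebra_simps)
    also have "\<dots> \<le> l2_norm (\<lambda>x. a * (f x - s x)) + l2_norm (\<lambda>x. b * (g x - t x))"
      using l2_norm_add[OF sq_int_cmult[OF sq_int_diff[OF fs ss(1)]] sq_int_cmult[OF sq_int_diff[OF gs ss(2)]]] by simp
    also have "\<dots> = \<bar>a\<bar> * l2_norm (\<lambda>x. f x - s x) + \<bar>b\<bar> * l2_norm (\<lambda>x. g x - t x)"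
      by (simp add: l2_norm_cmult)
    also have "\<dots> \<le> \<bar>a\<bar> * e' + \<bar>b\<bar> * e'"
      using s(2) t(2) by (intro add_mono mult_left_mono) auto
    also have "\<dots> < e"
    proof -
      have "(\<bar>a\<bar> + \<bar>b\<bar>) * e' < (\<bar>a\<bar> + \<bar>b\<bar> + 1) * e'" using e'0 by simp
      also have "\<dots> = e / 2" unfolding e'_def by (simp add: field_simps)
      finally show ?thesis using e by (simp add: algebra_simps)
    qed
    finally have "l2_norm (\<lambda>x. (a * f x + b * g x) - (a * s x + b * t x)) < e" .
    then show "\<exists>s'\<in>lin_span (EU D L lam). l2_norm (\<lambda>x. a * f x + b * g x - s' x) < e"
      using span_lin[OF s(1) t(1), of a b] by (intro bexI[of _ "\<lambda>x. a * s x + b * t x"]) auto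
  qed
next
  fix f assume f: "sq_int f \<and> (\<forall>e>0. \<exists>s\<in>PW_space D L lam. l2_norm (\<lambda>x. f x - s x) < e)"
  show "f \<in> PW_space D L lam"
    unfolding PW_EU l2_closure_def
  proof (intro CollectI conjI allI impI)
    show "sq_int f" using f by blast
    fix e :: real assume e: "e > 0"
    obtain p where p: "p \<in> PW_space D L lam" "l2_norm (\<lambda>x. f x - p x) < e/2"
      using f e half_gt_zero by blast
    obtain s where s: "s \<in> lin_span (EU D L lam)" "l2_norm (\<lambda>x. p x - s x) < e/2"
    proof -
      have "e/2 > 0" using e by simp
      then show ?thesis using p(1) that unfolding PW_EU l2_closure_def by blast
    qed
    have "l2_norm (\<lambda>x. f x - s x) \<le> l2_norm (\<lambda>x. f x - p x) + l2_norm (\<lambda>x. p x - s x)"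
      using l2_norm_triangle[of f s p] f PW_sq[OF p(1)] span_sq[OF EU_sq[OF sa] s(1)] by blast
    then show "\<exists>s\<in>lin_span (EU D L lam). l2_norm (\<lambda>x. f x - s x) < e"
      using p(2) s by (intro bexI[OF _ s(1)]) linarith
  qed
qed

lemma PW_mono:
  assumes "lam \<le> mu"
  shows "PW_space D L lam \<subseteq> PW_space D L mu"
  unfolding PW_EU l2_closure_def using span_mono[OF EU_mono[OF assms]] by blast

lemma spec_proj_char:
  assumes sa: "self_adjoint_op D L" and f: "sq_int f"
  shows "spec_proj D L lam f \<in> PW_space D L lam \<and>
         (\<forall>v\<in>PW_space D L lam. l2_inner (\<lambda>x. f x - spec_proj D L lam f x) v = 0)"
proof -
  define Q where "Q = (\<lambda>p. p \<in> PW_space D L lam \<and> (\<forall>v\<in>PW_space D L lam. l2_inner (\<lambda>x. f x - p x) v = 0))"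
  have "\<exists>p. Q p" unfolding Q_def using proj_exists[OF PW_subspace[OF sa] f] by blast
  then have "Q (SOME p. Q p)" by (rule someI_ex)
  moreover have "spec_proj D L lam f = (SOME p. Q p)" unfolding spec_proj_def Q_def by simp
  ultimately show ?thesis unfolding Q_def by simp
qed

lemma spec_proj_sq: "self_adjoint_op D L \<Longrightarrow> sq_int f \<Longrightarrow> sq_int (spec_proj D L lam f)"
  using spec_proj_char PW_sq by blast

lemma proj_fix:
  assumes sa: "self_adjoint_op D L" and g: "g \<in> PW_space D L lam"
  shows "ae_eq (spec_proj D L lam g) g"
proof -
  let ?P = "spec_proj D L lam"
  have gs: "sq_int g" using PW_sq g by blast
  have c: "?P g \<in> PW_space D L lam" "\<forall>v\<in>PW_space D L lam. l2_inner (\<lambda>x. g x - ?P g x) v = 0"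
    using spec_proj_char[OF sa gs] by auto
  have "(\<lambda>x. 1 * g x + (-1) * ?P g x) \<in> PW_space D L lam"
    using PW_subspace[OF sa] g c(1) unfolding l2_subspace_def by blast
  then have u: "(\<lambda>x. g x - ?P g x) \<in> PW_space D L lam" by simp
  have "l2_inner (\<lambda>x. g x - ?P g x) (\<lambda>x. g x - ?P g x) = 0" using c(2) u by blast
  then have "ae_eq (\<lambda>x. g x - ?P g x) (\<lambda>x. 0)" using l2_self_zero PW_sq[OF u] by blast
  then show ?thesis by (auto simp: ae_eq_def elim!: eventually_mono)
qed

lemma proj_contract:
  assumes sa: "self_adjoint_op D L" and f: "sq_int f"
  shows "l2_norm (spec_proj D L lam f) \<le> l2_norm f"
proof -
  let ?P = "spec_proj D L lam"
  have c: "?P f \<in> PW_space D L lam" "\<forall>v\<in>PW_space D L lam. l2_inner (\<lambda>x. f x - ?P f x) v = 0"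
    using spec_proj_char[OF sa f] by auto
  have ps: "sq_int (?P f)" using PW_sq c(1) by blast
  have a: "sq_int (\<lambda>x. f x - ?P f x)" using sq_int_diff[OF f ps] .
  have "(l2_norm (\<lambda>x. (f x - ?P f x) + ?P f x))\<^sup>2
     = (l2_norm (\<lambda>x. f x - ?P f x))\<^sup>2 + 2 * l2_inner (\<lambda>x. f x - ?P f x) (?P f) + (l2_norm (?P f))\<^sup>2"
    by (rule l2_norm_add_sq[OF a ps])
  then have "(l2_norm f)\<^sup>2 = (l2_norm (\<lambda>x. f x - ?P f x))\<^sup>2 + (l2_norm (?P f))\<^sup>2"
    using c by simp
  then have "(l2_norm (?P f))\<^sup>2 \<le> (l2_norm f)\<^sup>2" by simp
  then show ?thesis using l2_norm_nonneg power2_le_imp_le by blast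
qed


lemma graphon_bound: "graphon W \<Longrightarrow> \<exists>B\<ge>0. \<forall>u\<in>{0..1}. \<forall>v\<in>{0..1}. \<bar>W u v\<bar> \<le> B"
proof -
  assume "graphon W"
  then obtain B where B: "\<forall>u\<in>{0..1}. \<forall>v\<in>{0..1}. \<bar>W u v\<bar> \<le> B" unfolding graphon_def by blast
  then have "\<bar>W 0 0\<bar> \<le> B" by simp
  then have "B \<ge> 0" using abs_ge_zero order_trans by blast
  then show ?thesis using B by blast
qed

lemma T_bound:
  assumes W: "graphon W"
  shows "\<exists>B\<ge>0. \<forall>h. sq_int h \<longrightarrow> sq_int (T_op W h) \<longrightarrow> l2_norm (T_op W h) \<le> B * l2_norm h"
proof -
  obtain B where B: "B \<ge> 0" "\<And>u v. u \<in> {0..1} \<Longrightarrow> v \<in> {0..1} \<Longrightarrow> \<bar>W u v\<bar> \<le> B"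
    using graphon_bound[OF W] by blast
  have "l2_norm (T_op W h) \<le> B * l2_norm h" if h: "sq_int h" and Th: "sq_int (T_op W h)" for h
  proof -
    define A where "A = (LINT u|M01. \<bar>h u\<bar>)"
    have A0: "0 \<le> A" unfolding A_def by (intro integral_nonneg_AE AE_I2) simp
    have hi: "integrable M01 h" using sq_int_integrable[OF h] .
    have pt: "\<bar>T_op W h v\<bar> \<le> B * A" if v: "v \<in> {0..1}" for v
    proof (cases "integrable M01 (\<lambda>u. W v u * h u)")
      case True
      have "\<bar>T_op W h v\<bar> = \<bar>LINT u|M01. W v u * h u\<bar>" by (simp add: T_op_def)
      also have "\<dots> \<le> (LINT u|M01. B * \<bar>h u\<bar>)"
      proof (rule integral_abs_bound_integral[OF True])
        show "integrable M01 (\<lambda>u. B * \<bar>h u\<bar>)" using hi by simp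
        fix u assume "u \<in> space M01"
        then have "\<bar>W v u\<bar> \<le> B" using B(2) v by simp
        then show "\<bar>W v u * h u\<bar> \<le> B * \<bar>h u\<bar>" by (simp add: abs_mult mult_right_mono)
      qed
      also have "\<dots> = B * A" by (simp add: A_def)
      finally show ?thesis .
    next
      case False
      then have "T_op W h v = 0" unfolding T_op_def by (rule not_integrable_integral_eq)
      then show ?thesis using A0 B(1) by simp
    qed
    have "(l2_norm (T_op W h))\<^sup>2 = (LINT v|M01. (T_op W h v)\<^sup>2)"
      unfolding l2_norm_sq l2_inner_def by (simp add: power2_eq_square)
    also have "\<dots> \<le> (LINT v|M01. (B * A)\<^sup>2)"
    proof (rule integral_mono)
      show "integrable M01 (\<lambda>v. (T_op W h v)\<^sup>2)" using sq_int_sq[OF Th] .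
      show "integrable M01 (\<lambda>v. (B * A)\<^sup>2)" using finite_measure.integrable_const[OF fin_M01] by simp
      fix v assume "v \<in> space M01"
      then have "\<bar>T_op W h v\<bar> \<le> B * A" using pt by simp
      then have "\<bar>T_op W h v\<bar>^2 \<le> (B * A)^2" by (intro power_mono) auto
      then show "(T_op W h v)\<^sup>2 \<le> (B * A)\<^sup>2" by simp
    qed
    also have "\<dots> = (B * A)\<^sup>2" using measure_M01 by simp
    finally have "(l2_norm (T_op W h))\<^sup>2 \<le> (B * A)\<^sup>2" .
    then have "l2_norm (T_op W h) \<le> B * A" by (rule power2_le_imp_le) (use A0 B(1) in simp)
    also have "\<dots> \<le> B * l2_norm h" using L1_le_L2[OF h] B(1) by (simp add: A_def mult_left_mono)
    finally show ?thesis .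
  qed
  then show ?thesis using B(1) by blast
qed

definition "good_W D L lam W \<longleftrightarrow> graphon W \<and>
   (\<forall>f. sq_int f \<longrightarrow> spec_proj D L lam f \<in> D \<and> ae_eq (L (spec_proj D L lam f)) (T_op W f))"

lemma uGSO_good: "unbounded_GSO D L \<Longrightarrow> lam > 0 \<Longrightarrow> \<exists>W. good_W D L lam W"
  unfolding unbounded_GSO_def good_W_def by blast

lemma uGSO_sa: "unbounded_GSO D L \<Longrightarrow> self_adjoint_op D L"
  unfolding unbounded_GSO_def by blast

lemma good_T_sq:
  assumes sa: "self_adjoint_op D L" and W: "good_W D L lam W" and h: "sq_int h"
  shows "sq_int (T_op W h)"
  using W h sa_L[OF sa] sq_int_ae unfolding good_W_def by blast

lemma LPW:
  assumes sa: "self_adjoint_op D L" and W: "good_W D L lam W" and f: "sq_int f"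
  shows "L (spec_proj D L lam f) \<in> PW_space D L lam"
proof -
  let ?P = "spec_proj D L lam"
  let ?PW = "PW_space D L lam"
  define g where "g = ?P f"
  have gD: "g \<in> D" using W f unfolding good_W_def g_def by blast
  have gPW: "g \<in> ?PW" using spec_proj_char[OF sa f] g_def by blast
  have gs: "sq_int g" using sa_D[OF sa gD] .
  obtain B where B: "B \<ge> 0" "\<And>h. sq_int h \<Longrightarrow> sq_int (T_op W h) \<Longrightarrow> l2_norm (T_op W h) \<le> B * l2_norm h"
    using T_bound[of W] W unfolding good_W_def by blast
  have "L g \<in> ?PW"
    unfolding PW_EU l2_closure_def
  proof (intro CollectI conjI allI impI)
    show "sq_int (L g)" using sa_L[OF sa gD] .
    fix e :: real assume e: "e > 0"
    have e1: "e / (B + 1) > 0" using e B(1) by simp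
    obtain s where s: "s \<in> lin_span (EU D L lam)" "l2_norm (\<lambda>x. g x - s x) < e / (B + 1)"
      using gPW e1 unfolding PW_EU l2_closure_def by blast
    obtain s' where s': "s' \<in> lin_span (EU D L lam)" "ae_eq (L s) s'" and sD: "s \<in> D"
      using L_span[OF sa s(1)] by blast
    have ss: "sq_int s" using sa_D[OF sa sD] .
    define d where "d = (\<lambda>x. 1 * g x + (-1) * s x)"
    have dPW: "d \<in> ?PW" unfolding d_def using PW_subspace[OF sa] gPW span_in_PW[OF sa s(1)]
      unfolding l2_subspace_def by blast
    have dD: "d \<in> D" unfolding d_def using sa_lin[OF sa gD sD] .
    have ds: "sq_int d" using sa_D[OF sa dD] .
    have a1: "ae_eq (L d) (\<lambda>x. 1 * L g x + (-1) * L s x)" unfolding d_def using sa_Llin[OF sa gD sD] .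
    have PdD: "?P d \<in> D" using W ds unfolding good_W_def by blast
    have a2: "ae_eq (L (?P d)) (L d)" using L_ae[OF sa PdD dD proj_fix[OF sa dPW]] .
    have a3: "ae_eq (L (?P d)) (T_op W d)" using W ds unfolding good_W_def by blast
    have a4: "ae_eq (\<lambda>x. L g x - s' x) (T_op W d)"
    proof -
      have "ae_eq (\<lambda>x. L g x - s' x) (\<lambda>x. 1 * L g x + (-1) * L s x)"
        using s'(2) unfolding ae_eq_def by (auto elim!: eventually_mono)
      moreover have "ae_eq (\<lambda>x. 1 * L g x + (-1) * L s x) (T_op W d)"
        using ae_eq_trans[OF ae_eq_sym[OF a1] ae_eq_trans[OF ae_eq_sym[OF a2] a3]] .
      ultimately show ?thesis by (rule ae_eq_trans)
    qed
    have s's: "sq_int s'" using span_sq[OF EU_sq[OF sa] s'(1)] .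
    have "l2_norm (\<lambda>x. L g x - s' x) = l2_norm (T_op W d)"
      using l2_norm_ae[OF sq_int_diff[OF sa_L[OF sa gD] s's] a4] .
    also have "\<dots> \<le> B * l2_norm d" using B(2) ds good_T_sq[OF sa W ds] by blast
    also have "l2_norm d = l2_norm (\<lambda>x. g x - s x)" unfolding d_def by simp
    also have "B * l2_norm (\<lambda>x. g x - s x) \<le> B * (e / (B + 1))"
      using s(2) B(1) by (intro mult_left_mono) auto
    also have "\<dots> < e" using e B(1) by (simp add: field_simps)
    finally show "\<exists>s\<in>lin_span (EU D L lam). l2_norm (\<lambda>x. L g x - s x) < e" using s'(1) by blast
  qed
  then show ?thesis by (simp add: g_def)
qed

lemma main_est:
  assumes sa: "self_adjoint_op D L" and Wl: "good_W D L lam W" and Wm: "good_W D L mu Wmu"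
    and lm: "lam \<le> mu"
    and K: "\<And>h. sq_int h \<Longrightarrow> sq_int (K h)"
    and Kb: "\<And>h. sq_int h \<Longrightarrow> l2_norm (\<lambda>x. K h x - T_op Wmu h x) \<le> \<epsilon> * l2_norm h"
    and eps: "\<epsilon> \<ge> 0" and f: "sq_int f"
  shows "l2_norm (\<lambda>x. spec_proj D L lam (K (spec_proj D L lam f)) x - L (spec_proj D L lam f) x) \<le> \<epsilon> * l2_norm f"
proof -
  let ?P = "spec_proj D L lam"
  let ?PW = "PW_space D L lam"
  define g where "g = ?P f"
  have gD: "g \<in> D" using Wl f unfolding good_W_def g_def by blast
  have gPW: "g \<in> ?PW" using spec_proj_char[OF sa f] g_def by blast
  have gs: "sq_int g" using sa_D[OF sa gD] .
  have LgPW: "L g \<in> ?PW" using LPW[OF sa Wl f] g_def by simp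
  have Lgs: "sq_int (L g)" using sa_L[OF sa gD] .
  have Kgs: "sq_int (K g)" using K[OF gs] .
  have PK: "?P (K g) \<in> ?PW" "\<forall>v\<in>?PW. l2_inner (\<lambda>x. K g x - ?P (K g) x) v = 0"
    using spec_proj_char[OF sa Kgs] by auto
  have PKs: "sq_int (?P (K g))" using PW_sq PK(1) by blast
  define z where "z = (\<lambda>x. 1 * ?P (K g) x + (-1) * L g x)"
  have zPW: "z \<in> ?PW" unfolding z_def using PW_subspace[OF sa] PK(1) LgPW
    unfolding l2_subspace_def by blast
  have zs: "sq_int z" using PW_sq zPW by blast
  have z_eq: "z = (\<lambda>x. ?P (K g) x - L g x)" unfolding z_def by simp
  have Tgs: "sq_int (T_op Wmu g)" using good_T_sq[OF sa Wm gs] .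
  have aeT: "ae_eq (T_op Wmu g) (L g)"
  proof -
    have PmD: "spec_proj D L mu g \<in> D" using Wm gs unfolding good_W_def by blast
    have gPWm: "g \<in> PW_space D L mu" using PW_mono[OF lm] gPW by blast
    have "ae_eq (L (spec_proj D L mu g)) (L g)" using L_ae[OF sa PmD gD proj_fix[OF sa gPWm]] .
    moreover have "ae_eq (L (spec_proj D L mu g)) (T_op Wmu g)" using Wm gs unfolding good_W_def by blast
    ultimately show ?thesis using ae_eq_trans[OF ae_eq_sym] by blast
  qed
  have "(l2_norm z)\<^sup>2 = l2_inner z z" by (rule l2_norm_sq)
  also have "\<dots> = l2_inner (?P (K g)) z - l2_inner (L g) z"
    unfolding z_eq using l2_inner_diff_left[OF PKs Lgs zs] by (simp add: z_eq)
  also have "l2_inner (?P (K g)) z = l2_inner (K g) z"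
    using PK(2) zPW l2_inner_diff_left[OF Kgs PKs zs] by simp
  also have "l2_inner (L g) z = l2_inner (T_op Wmu g) z"
    using l2_inner_ae[OF Tgs zs aeT ae_eq_refl] by simp
  also have "l2_inner (K g) z - l2_inner (T_op Wmu g) z = l2_inner (\<lambda>x. K g x - T_op Wmu g x) z"
    using l2_inner_diff_left[OF Kgs Tgs zs] by simp
  also have "\<dots> \<le> l2_norm (\<lambda>x. K g x - T_op Wmu g x) * l2_norm z"
    using l2_CS[OF sq_int_diff[OF Kgs Tgs] zs] by simp
  also have "\<dots> \<le> (\<epsilon> * l2_norm f) * l2_norm z"
  proof (rule mult_right_mono)
    show "l2_norm (\<lambda>x. K g x - T_op Wmu g x) \<le> \<epsilon> * l2_norm f"
    proof -
      have "\<epsilon> * l2_norm g \<le> \<epsilon> * l2_norm f"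
        using proj_contract[OF sa f] eps g_def by (simp add: mult_left_mono)
      then show ?thesis using Kb[OF gs] by linarith
    qed
  qed (rule l2_norm_nonneg)
  finally have "l2_norm z * l2_norm z \<le> (\<epsilon> * l2_norm f) * l2_norm z" by (simp add: power2_eq_square)
  then have "l2_norm z \<le> \<epsilon> * l2_norm f"
  proof (cases "l2_norm z = 0")
    case True
    then show ?thesis using eps l2_norm_nonneg[of f] by simp
  next
    case False
    then have "l2_norm z > 0" using l2_norm_nonneg[of z] by simp
    then show ?thesis using \<open>l2_norm z * l2_norm z \<le> (\<epsilon> * l2_norm f) * l2_norm z\<close>
      using mult_le_cancel_right_pos by blast
  qed
  then show ?thesis using z_eq g_def by simp
qed


definition idx :: "nat \<Rightarrow> real \<Rightarrow> nat" where "idx N v = nat \<lfloor>v * real N\<rfloor> + 1"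
definition Ic :: "nat \<Rightarrow> nat \<Rightarrow> real set" where "Ic N i = {(real i - 1) / real N ..< real i / real N}"
definition cell :: "nat \<Rightarrow> nat \<Rightarrow> nat \<Rightarrow> (real \<times> real) set" where "cell N i j = Ic N i \<times> Ic N j"
definition Q01 :: "(real \<times> real) set" where "Q01 = {0..<1} \<times> {0..<1}"

lemma idx_in:
  assumes N: "N \<ge> 1" and v: "v \<in> {0..<1}"
  shows "idx N v \<in> {1..N} \<and> v \<in> Ic N (idx N v)"
proof -
  define f where "f = \<lfloor>v * real N\<rfloor>"
  have Np: "real N > 0" using N by simp
  have f0: "0 \<le> f" unfolding f_def using v by simp
  have fle: "real_of_int f \<le> v * real N" unfolding f_def by simp
  have flt: "v * real N < real_of_int f + 1" unfolding f_def by linarith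
  have "v * real N < real N" using v Np by simp
  then have "real_of_int f < real N" using fle by linarith
  then have fN: "f < int N" by linarith
  have i: "idx N v = nat f + 1" unfolding idx_def f_def by simp
  have ri: "real (idx N v) = real_of_int f + 1" unfolding i using f0 by simp
  have "idx N v \<in> {1..N}" unfolding i using fN f0 by auto
  moreover have "(real (idx N v) - 1) / real N \<le> v"
    unfolding ri using fle Np by (simp add: divide_le_eq)
  moreover have "v < real (idx N v) / real N"
    unfolding ri using flt Np by (simp add: less_divide_eq)
  ultimately show ?thesis by (simp add: Ic_def)
qed

lemma Ic_idx:
  assumes N: "N \<ge> 1" and i: "i \<in> {1..N}" and v: "v \<in> Ic N i"
  shows "v \<in> {0..<1} \<and> idx N v = i"
proof -
  have Np: "real N > 0" using N by simp
  have l: "real i - 1 \<le> v * real N" using v Np by (simp add: Ic_def divide_le_eq)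
  have u: "v * real N < real i" using v Np by (simp add: Ic_def less_divide_eq)
  have "\<lfloor>v * real N\<rfloor> = int i - 1"
    using l u by (intro floor_unique) auto
  then have "idx N v = i" unfolding idx_def using i by auto
  moreover have "0 \<le> v"
  proof -
    have "0 \<le> real i - 1" using i by simp
    then have "0 \<le> v * real N" using l by linarith
    then show ?thesis using Np by (simp add: zero_le_mult_iff)
  qed
  moreover have "v < 1"
  proof -
    have "real i \<le> real N" using i by simp
    then have "v * real N < real N" using u by simp
    then show ?thesis using Np by simp
  qed
  ultimately show ?thesis by simp
qed

lemma ind_Ic:
  assumes N: "N \<ge> 1" and i: "i \<in> {1..N}"
  shows "indicator (Ic N i) v = (if v \<in> {0..<1} \<and> idx N v = i then 1 else (0::real))"
  using Ic_idx[OF N i, of v] idx_in[OF N, of v] by (auto simp: indicator_def)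

lemma ind_Ic':
  assumes N: "N \<ge> 1" and i: "i \<in> {1..N}"
  shows "indicator {(real i - 1) / real N ..< real i / real N} v = (if v \<in> {0..<1} \<and> idx N v = i then 1 else (0::real))"
  using ind_Ic[OF N i] by (simp add: Ic_def)

lemma sum_delta_mult: "finite S \<Longrightarrow> (\<Sum>j\<in>S. f j * (if c = j then 1 else (0::real))) = (if c \<in> S then f c else 0)"
proof -
  assume "finite S"
  have eq: "(\<lambda>j. f j * (if c = j then 1 else (0::real))) = (\<lambda>j. if c = j then f j else 0)" by auto
  show ?thesis by (simp only: eq sum.delta'[OF \<open>finite S\<close>])
qed

lemma induced_eq:
  assumes N: "N \<ge> 1"
  shows "induced_graphon N a v u = (if v \<in> {0..<1} \<and> u \<in> {0..<1} then a (idx N v) (idx N u) else 0)"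
proof -
  have "induced_graphon N a v u = (\<Sum>i\<in>{1..N}. \<Sum>j\<in>{1..N}. a i j *
      (if v \<in> {0..<1} \<and> idx N v = i then 1 else 0) * (if u \<in> {0..<1} \<and> idx N u = j then 1 else 0))"
    unfolding induced_graphon_def
    by (intro sum.cong refl) (simp add: ind_Ic'[OF N])
  also have "\<dots> = (if v \<in> {0..<1} \<and> u \<in> {0..<1} then a (idx N v) (idx N u) else 0)"
  proof (cases "v \<in> {0..<1} \<and> u \<in> {0..<1}")
    case True
    have iv: "idx N v \<in> {1..N}" "idx N u \<in> {1..N}" using idx_in[OF N] True by auto
    have "(\<Sum>i\<in>{1..N}. \<Sum>j\<in>{1..N}. a i j *
      (if v \<in> {0..<1} \<and> idx N v = i then 1 else 0) * (if u \<in> {0..<1} \<and> idx N u = j then 1 else 0))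
      = (\<Sum>i\<in>{1..N}. \<Sum>j\<in>{1..N}. if idx N v = i \<and> idx N u = j then a i j else 0)"
      using True by (intro sum.cong refl) auto
    also have "\<dots> = (\<Sum>i\<in>{1..N}. if idx N v = i then a i (idx N u) else 0)"
    proof (intro sum.cong refl)
      fix i assume "i \<in> {1..N}"
      show "(\<Sum>j\<in>{1..N}. if idx N v = i \<and> idx N u = j then a i j else 0) = (if idx N v = i then a i (idx N u) else 0)"
      proof (cases "idx N v = i")
        case True
        then show ?thesis using iv by (simp add: sum.delta')
      next
        case False
        then show ?thesis by simp
      qed
    qed
    also have "\<dots> = a (idx N v) (idx N u)"
      using iv by (simp add: sum.delta')
    finally show ?thesis using True by simp
  next
    case False
    then show ?thesis by auto
  qed
  finally show ?thesis .
qed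

lemma Ic_borel: "Ic N i \<in> sets borel" by (simp add: Ic_def)

lemma cell_borel: "cell N i j \<in> sets borel"
proof -
  have "cell N i j \<in> sets (borel \<Otimes>\<^sub>M borel)" unfolding cell_def by (intro pair_measureI Ic_borel)
  then show ?thesis by (simp only: borel_prod)
qed

lemma Q01_borel: "Q01 \<in> sets borel"
proof -
  have "Q01 \<in> sets (borel \<Otimes>\<^sub>M borel)" unfolding Q01_def by (intro pair_measureI) auto
  then show ?thesis by (simp only: borel_prod)
qed

lemma Ic_len: "x \<in> Ic N i \<Longrightarrow> y \<in> Ic N i \<Longrightarrow> N \<ge> 1 \<Longrightarrow> \<bar>x - y\<bar> < 1 / real N"
  unfolding Ic_def by (auto simp: field_simps abs_less_iff)

lemma cell_dist:
  assumes N: "N \<ge> 1" and z: "z \<in> cell N i j" and w: "w \<in> cell N i j"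
  shows "dist z w < 2 / real N"
proof -
  have a: "\<bar>fst z - fst w\<bar> < 1 / real N" using z w N Ic_len by (auto simp: cell_def)
  have b: "\<bar>snd z - snd w\<bar> < 1 / real N" using z w N Ic_len by (auto simp: cell_def)
  have "dist z w = sqrt ((dist (fst z) (fst w))\<^sup>2 + (dist (snd z) (snd w))\<^sup>2)"
    by (simp add: dist_prod_def)
  also have "\<dots> \<le> \<bar>dist (fst z) (fst w)\<bar> + \<bar>dist (snd z) (snd w)\<bar>"
    by (rule sqrt_sum_squares_le_sum_abs)
  also have "\<dots> < 2 / real N" using a b by (simp add: dist_real_def)
  finally show ?thesis .
qed

definition cellcover :: "nat \<Rightarrow> (real \<times> real) set \<Rightarrow> (real \<times> real) set" where
  "cellcover N K = {z \<in> Q01. cell N (idx N (fst z)) (idx N (snd z)) \<inter> K \<noteq> {}}"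

lemma in_own_cell:
  assumes N: "N \<ge> 1" and z: "z \<in> Q01"
  shows "z \<in> cell N (idx N (fst z)) (idx N (snd z))"
  using idx_in[OF N, of "fst z"] idx_in[OF N, of "snd z"] z by (auto simp: Q01_def cell_def mem_Times_iff)

lemma cellcover_sup: "N \<ge> 1 \<Longrightarrow> K \<subseteq> Q01 \<Longrightarrow> K \<subseteq> cellcover N K"
  unfolding cellcover_def using in_own_cell by blast

lemma cellcover_sub:
  assumes N: "N \<ge> 1" and U: "(\<Union>x\<in>K. ball x \<epsilon>) \<subseteq> U" and e: "2 / real N \<le> \<epsilon>"
  shows "cellcover N K \<subseteq> U"
proof
  fix z assume "z \<in> cellcover N K"
  then obtain x where z: "z \<in> Q01" and x: "x \<in> cell N (idx N (fst z)) (idx N (snd z))" "x \<in> K"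
    unfolding cellcover_def by blast
  have "dist x z < 2 / real N" using cell_dist[OF N x(1) in_own_cell[OF N z]] .
  then have "z \<in> ball x \<epsilon>" using e by (simp add: dist_commute)
  then show "z \<in> U" using U x(2) by blast
qed

lemma cellcover_eq:
  assumes N: "N \<ge> 1"
  shows "cellcover N K = (\<Union>i\<in>{1..N}. \<Union>j\<in>{1..N}. if cell N i j \<inter> K \<noteq> {} then cell N i j else {})"
proof (intro equalityI subsetI)
  fix z assume z: "z \<in> cellcover N K"
  then have zQ: "z \<in> Q01" unfolding cellcover_def by blast
  have "idx N (fst z) \<in> {1..N}" "idx N (snd z) \<in> {1..N}"
    using idx_in[OF N] zQ by (auto simp: Q01_def mem_Times_iff)
  moreover have "cell N (idx N (fst z)) (idx N (snd z)) \<inter> K \<noteq> {}" using z unfolding cellcover_def by blast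
  ultimately show "z \<in> (\<Union>i\<in>{1..N}. \<Union>j\<in>{1..N}. if cell N i j \<inter> K \<noteq> {} then cell N i j else {})"
    using in_own_cell[OF N zQ] by (intro UN_I[of "idx N (fst z)"] UN_I[of "idx N (snd z)"]) auto
next
  fix z assume "z \<in> (\<Union>i\<in>{1..N}. \<Union>j\<in>{1..N}. if cell N i j \<inter> K \<noteq> {} then cell N i j else {})"
  then obtain i where i: "i \<in> {1..N}" "z \<in> (\<Union>j\<in>{1..N}. if cell N i j \<inter> K \<noteq> {} then cell N i j else {})"
    by blast
  then obtain j where j: "j \<in> {1..N}" "z \<in> (if cell N i j \<inter> K \<noteq> {} then cell N i j else {})"
    by blast
  have ij: "i \<in> {1..N}" "j \<in> {1..N}" "cell N i j \<inter> K \<noteq> {}" "z \<in> cell N i j"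
    using i j by (auto split: if_splits)
  have "fst z \<in> Ic N i" "snd z \<in> Ic N j" using ij(4) by (auto simp: cell_def mem_Times_iff)
  then have "fst z \<in> {0..<1} \<and> idx N (fst z) = i" "snd z \<in> {0..<1} \<and> idx N (snd z) = j"
    using Ic_idx[OF N ij(1)] Ic_idx[OF N ij(2)] by auto
  then show "z \<in> cellcover N K" unfolding cellcover_def Q01_def using ij(3)
    by (auto simp: mem_Times_iff)
qed

lemma cellcover_borel:
  assumes N: "N \<ge> 1"
  shows "cellcover N K \<in> sets borel"
  unfolding cellcover_eq[OF N] using cell_borel by auto

lemma cell_swap: "(b, a) \<in> cell N j i \<longleftrightarrow> (a, b) \<in> cell N i j"
  by (auto simp: cell_def)

lemma cell_K_sym:
  assumes K: "\<And>a b. (a, b) \<in> K \<Longrightarrow> (b, a) \<in> K"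
  shows "cell N i j \<inter> K \<noteq> {} \<longleftrightarrow> cell N j i \<inter> K \<noteq> {}"
proof -
  have *: "cell N j i \<inter> K \<noteq> {}" if ne: "cell N i j \<inter> K \<noteq> {}" for i j
  proof -
    obtain p where p: "p \<in> cell N i j" "p \<in> K" using ne by blast
    obtain a b where "p = (a, b)" by (cases p)
    then have "(a, b) \<in> cell N i j" "(a, b) \<in> K" using p by auto
    then have "(b, a) \<in> cell N j i" "(b, a) \<in> K" using cell_swap K by auto
    then show ?thesis by blast
  qed
  show ?thesis using *[of i j] *[of j i] by blast
qed


lemma Q01_bounded: "bounded Q01"
proof -
  have "Q01 \<subseteq> cbox (0,0) (1,1)" unfolding Q01_def cbox_Pair_eq by auto
  then show ?thesis using bounded_cbox bounded_subset by blast
qed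

lemma set_approx:
  assumes A: "A \<in> sets borel" "A \<subseteq> Q01" and sym: "\<And>a b. (a, b) \<in> A \<Longrightarrow> (b, a) \<in> A"
    and eta: "\<eta> > 0"
  shows "\<exists>K U N0. K \<subseteq> A \<and> A \<subseteq> U \<and> U \<in> sets borel \<and> K \<in> sets borel \<and>
           (\<forall>a b. (a, b) \<in> K \<longrightarrow> (b, a) \<in> K) \<and> emeasure lborel (U - K) < ennreal \<eta> \<and>
           N0 \<ge> 1 \<and> (\<forall>N\<ge>N0. cellcover N K \<subseteq> U)"
proof -
  have Al: "A \<in> sets lebesgue" using A(1) by simp
  have e2: "\<eta> / 2 > 0" using eta by simp
  obtain T where T: "closed T" "T \<subseteq> A" "A - T \<in> lmeasurable" "emeasure lebesgue (A - T) < ennreal (\<eta> / 2)"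
    by (rule sets_lebesgue_inner_closed[OF Al e2])
  obtain U where U: "open U" "A \<subseteq> U" "U - A \<in> lmeasurable" "emeasure lebesgue (U - A) < ennreal (\<eta> / 2)"
    by (rule sets_lebesgue_outer_open[OF Al e2])
  have Tc: "compact T"
    using T(1) T(2) A(2) Q01_bounded bounded_subset compact_eq_bounded_closed by blast
  define sw where "sw = (\<lambda>z::real \<times> real. (snd z, fst z))"
  have swc: "continuous_on UNIV sw" unfolding sw_def by (intro continuous_intros)
  define K where "K = T \<union> sw ` T"
  have Kc: "compact K" unfolding K_def
    using Tc compact_continuous_image[OF continuous_on_subset[OF swc] Tc] by blast
  have KA: "K \<subseteq> A"
    unfolding K_def sw_def using T(2) sym by auto
  have Ksym: "\<forall>a b. (a, b) \<in> K \<longrightarrow> (b, a) \<in> K"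
  proof (intro allI impI)
    fix a b assume ab: "(a, b) \<in> K"
    show "(b, a) \<in> K"
    proof (cases "(a, b) \<in> T")
      case True
      then have "sw (a, b) \<in> sw ` T" by blast
      then show ?thesis unfolding K_def sw_def by simp
    next
      case False
      then have "(a, b) \<in> sw ` T" using ab unfolding K_def by blast
      then obtain p where p: "p \<in> T" "(a, b) = sw p" by blast
      then have "p = (b, a)" unfolding sw_def by (cases p) auto
      then show ?thesis using p(1) unfolding K_def by blast
    qed
  qed
  have Kb: "K \<in> sets borel" using Kc by (simp add: compact_imp_closed borel_closed)
  have Ub: "U \<in> sets borel" using U(1) by simp
  have Tb: "T \<in> sets borel" using T(1) by simp
  have "emeasure lborel (U - K) \<le> emeasure lborel (U - T)"
    unfolding K_def using Ub Tb by (intro emeasure_mono) auto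
  also have "\<dots> = emeasure lebesgue (U - T)"
    using Ub Tb by simp
  also have "\<dots> \<le> emeasure lebesgue ((U - A) \<union> (A - T))"
  proof (rule emeasure_mono)
    have "U \<in> sets lebesgue" "T \<in> sets lebesgue" using Ub Tb by simp_all
    then show "(U - A) \<union> (A - T) \<in> sets lebesgue" using Al by auto
  qed auto
  also have "\<dots> \<le> emeasure lebesgue (U - A) + emeasure lebesgue (A - T)"
    using Ub Al Tb by (intro emeasure_subadditive) auto
  also have "\<dots> < ennreal (\<eta> / 2 + \<eta> / 2)"
    using U(4) T(4) by (rule add_mono_ennreal)
  finally have meas: "emeasure lborel (U - K) < ennreal \<eta>" by simp
  obtain \<epsilon> where eps: "\<epsilon> > 0" "(\<Union>x\<in>K. ball x \<epsilon>) \<subseteq> U"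
    using compact_subset_open_imp_ball_epsilon_subset[OF Kc U(1)] KA U(2) by blast
  define N0 where "N0 = nat \<lceil>2 / \<epsilon>\<rceil> + 1"
  have N01: "N0 \<ge> 1" by (simp add: N0_def)
  have cov: "cellcover N K \<subseteq> U" if N: "N \<ge> N0" for N
  proof (rule cellcover_sub[OF _ eps(2)])
    show N1: "N \<ge> 1" using N N01 by simp
    have "2 / \<epsilon> \<le> real N0" unfolding N0_def by linarith
    then have "2 / \<epsilon> \<le> real N" using N by linarith
    then show "2 / real N \<le> \<epsilon>" using eps(1) N1 by (simp add: field_simps)
  qed
  show ?thesis
    apply (rule exI[of _ K], rule exI[of _ U], rule exI[of _ N0])
    using KA U(2) Ub Kb Ksym meas N01 cov by simp
qed


lemma emeasure_Q01: "emeasure lborel Q01 = 1"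
proof -
  have "emeasure (lborel :: (real \<times> real) measure) Q01 = emeasure (lborel \<Otimes>\<^sub>M lborel) ({0..<1::real} \<times> {0..<1::real})"
    unfolding Q01_def lborel_prod ..
  also have "\<dots> = emeasure lborel {0..<1::real} * emeasure lborel {0..<1::real}"
    by (rule lborel.emeasure_pair_measure_Times) auto
  finally show ?thesis by simp
qed

lemma measure_Q01: "measure lborel Q01 = 1"
  by (simp add: measure_def emeasure_Q01)

lemma cellcover_Q01: "cellcover N K \<subseteq> Q01"
  unfolding cellcover_def by blast

lemma S_repr:
  assumes N: "N \<ge> 1" and Kset: "finite Kset"
  shows "induced_graphon N (\<lambda>i j. \<Sum>k\<in>Kset. c k * (if cell N i j \<inter> KK k \<noteq> {} then 1 else 0)) (fst z) (snd z)
       = (\<Sum>k\<in>Kset. c k * indicator (cellcover N (KK k)) z)"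
proof (cases "z \<in> Q01")
  case True
  then have "fst z \<in> {0..<1} \<and> snd z \<in> {0..<1}" by (auto simp: Q01_def mem_Times_iff)
  then show ?thesis using True
    by (simp add: induced_eq[OF N] cellcover_def indicator_def of_bool_def)
next
  case False
  then have "\<not> (fst z \<in> {0..<1} \<and> snd z \<in> {0..<1})" by (auto simp: Q01_def mem_Times_iff)
  moreover have "indicator (cellcover N (KK k)) z = (0::real)" for k
    using False cellcover_Q01 by (auto simp: indicator_def)
  ultimately show ?thesis by (auto simp: induced_eq[OF N])
qed

lemma pointwise_bound:
  fixes g :: "real \<times> real \<Rightarrow> real" and m :: nat and z :: "real \<times> real"
  assumes m: "m \<ge> 1"
  and Kset: "finite Kset" and rng: "\<And>z. z \<in> Q01 \<Longrightarrow> \<lfloor>real m * g z\<rfloor> \<in> Kset"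
  and g0: "\<And>z. z \<notin> Q01 \<Longrightarrow> g z = 0"
  and KA: "\<And>k. k \<in> Kset \<Longrightarrow> KK k \<subseteq> {z \<in> Q01. \<lfloor>real m * g z\<rfloor> = k}"
  and AU: "\<And>k. k \<in> Kset \<Longrightarrow> {z \<in> Q01. \<lfloor>real m * g z\<rfloor> = k} \<subseteq> UU k"
  and KC: "\<And>k. k \<in> Kset \<Longrightarrow> KK k \<subseteq> CC k" and CU: "\<And>k. k \<in> Kset \<Longrightarrow> CC k \<subseteq> UU k"
  and CQ: "\<And>k. CC k \<subseteq> Q01"
  shows "((\<Sum>k\<in>Kset. (real_of_int k / real m) * indicator (CC k) z) - g z)\<^sup>2
     \<le> 2 / (real m)\<^sup>2 * indicator Q01 z
        + 2 * (\<Sum>k\<in>Kset. \<bar>real_of_int k / real m\<bar>) * (\<Sum>k\<in>Kset. \<bar>real_of_int k / real m\<bar> * indicator (UU k - KK k) z)"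
proof -
  define cs where "cs k = real_of_int k / real m" for k
  define Cm where "Cm = (\<Sum>k\<in>Kset. \<bar>cs k\<bar>)"
  define e where "e k = (indicator (UU k - KK k) z :: real)" for k
  define Y where "Y = (\<Sum>k\<in>Kset. \<bar>cs k\<bar> * e k)"
  have Cm0: "0 \<le> Cm" unfolding Cm_def by (simp add: sum_nonneg)
  have e01: "0 \<le> e k" "e k \<le> 1" for k unfolding e_def by (auto simp: indicator_def)
  have Y0: "0 \<le> Y" unfolding Y_def using e01 by (simp add: sum_nonneg)
  have YC: "Y \<le> Cm" unfolding Y_def Cm_def using e01
    by (intro sum_mono) (simp add: mult_left_le)
  have mp: "real m > 0" using m by simp
  show ?thesis
  proof (cases "z \<in> Q01")
    case False
    have "indicator (CC k) z = (0::real)" for k using False CQ by (auto simp: indicator_def)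
    then have "((\<Sum>k\<in>Kset. (real_of_int k / real m) * indicator (CC k) z) - g z)\<^sup>2 = 0"
      using g0[OF False] by simp
    moreover have "0 \<le> 2 * Cm * Y" using Cm0 Y0 by simp
    ultimately show ?thesis using False by (simp add: Cm_def Y_def cs_def e_def)
  next
    case True
    define k0 where "k0 = \<lfloor>real m * g z\<rfloor>"
    have k0K: "k0 \<in> Kset" using rng[OF True] k0_def by simp
    have hq: "\<bar>g z - cs k0\<bar> \<le> 1 / real m"
    proof -
      have a: "real_of_int k0 \<le> real m * g z" "real m * g z < real_of_int k0 + 1" unfolding k0_def by linarith+
      have "real m * (g z - cs k0) = real m * g z - real_of_int k0" using mp by (simp add: cs_def field_simps)
      then have "0 \<le> real m * (g z - cs k0)" "real m * (g z - cs k0) \<le> 1" using a by linarith+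
      then have "0 \<le> g z - cs k0" "g z - cs k0 \<le> 1 / real m" using mp
        by (simp_all add: zero_le_mult_iff field_simps)
      then show ?thesis by simp
    qed
    have hk: "\<bar>indicator (CC k) z - (if k = k0 then 1 else 0)\<bar> \<le> e k" if k: "k \<in> Kset" for k
    proof -
      have zA: "z \<in> {z \<in> Q01. \<lfloor>real m * g z\<rfloor> = k} \<longleftrightarrow> k = k0" using True k0_def by auto
      show ?thesis
      proof (cases "z \<in> CC k")
        case True
        then show ?thesis
        proof (cases "k = k0")
          case True then show ?thesis using \<open>z \<in> CC k\<close> e01 by simp
        next
          case False
          then have "z \<notin> KK k" using KA[OF k] zA by blast
          moreover have "z \<in> UU k" using CU[OF k] \<open>z \<in> CC k\<close> by blast
          ultimately show ?thesis using False \<open>z \<in> CC k\<close> by (simp add: e_def)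
        qed
      next
        case False
        then show ?thesis
        proof (cases "k = k0")
          case True
          then have "z \<in> UU k" using AU[OF k] zA by blast
          moreover have "z \<notin> KK k" using KC[OF k] \<open>z \<notin> CC k\<close> by blast
          ultimately show ?thesis using True \<open>z \<notin> CC k\<close> by (simp add: e_def)
        next
          case False then show ?thesis using \<open>z \<notin> CC k\<close> e01 by simp
        qed
      qed
    qed
    define S where "S = (\<Sum>k\<in>Kset. cs k * indicator (CC k) z)"
    have "S - cs k0 = (\<Sum>k\<in>Kset. cs k * (indicator (CC k) z - (if k = k0 then 1 else 0)))"
      using k0K Kset by (simp add: S_def sum_subtractf right_diff_distrib sum.delta if_distrib[of "\<lambda>x. cs _ * x"] cong: if_cong)
    then have "\<bar>S - cs k0\<bar> \<le> (\<Sum>k\<in>Kset. \<bar>cs k * (indicator (CC k) z - (if k = k0 then 1 else 0))\<bar>)"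
      by (simp add: sum_abs)
    also have "\<dots> \<le> Y" unfolding Y_def
      using hk by (intro sum_mono) (simp add: abs_mult mult_left_mono)
    finally have hS: "\<bar>S - cs k0\<bar> \<le> Y" .
    have "\<bar>S - g z\<bar> \<le> Y + 1 / real m" using hS hq by linarith
    then have "(S - g z)\<^sup>2 \<le> (Y + 1 / real m)\<^sup>2"
      using Y0 mp by (metis abs_ge_zero power2_abs power_mono)
    also have "\<dots> \<le> 2 * Y\<^sup>2 + 2 * (1 / real m)\<^sup>2"
    proof -
      have "(Y + 1 / real m)\<^sup>2 + (Y - 1 / real m)\<^sup>2 = 2 * Y\<^sup>2 + 2 * (1 / real m)\<^sup>2"
        by (simp add: power2_eq_square algebra_simps)
      moreover have "0 \<le> (Y - 1 / real m)\<^sup>2" by simp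
      ultimately show ?thesis by linarith
    qed
    also have "2 * Y\<^sup>2 \<le> 2 * Cm * Y" using YC Y0 by (simp add: power2_eq_square mult_right_mono)
    finally have "(S - g z)\<^sup>2 \<le> 2 / (real m)\<^sup>2 + 2 * Cm * Y" by (simp add: power_divide)
    then show ?thesis using True by (simp add: S_def cs_def Cm_def Y_def e_def)
  qed
qed

lemma step_approx:
  fixes g :: "real \<times> real \<Rightarrow> real"
  assumes gm[measurable]: "g \<in> borel_measurable borel" and gB: "\<And>z. \<bar>g z\<bar> \<le> B"
    and g0: "\<And>z. z \<notin> Q01 \<Longrightarrow> g z = 0"
    and gs: "\<And>a b. g (a, b) = g (b, a)" and dl: "\<delta> > 0"
  shows "\<exists>N\<ge>1. \<exists>a. (\<forall>i j. a i j = a j i) \<and>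
     (\<integral>\<^sup>+z. ennreal ((induced_graphon N a (fst z) (snd z) - g z)\<^sup>2) \<partial>lborel) \<le> ennreal \<delta>"
proof -
  have B0: "0 \<le> B" using gB[of 0] by linarith
  define m :: nat where "m = nat \<lceil>4 / \<delta>\<rceil> + 1"
  have m1: "m \<ge> 1" by (simp add: m_def)
  have mp: "real m > 0" using m1 by simp
  have m4: "4 / \<delta> \<le> real m" unfolding m_def by linarith
  have hm: "2 / (real m)\<^sup>2 \<le> \<delta> / 2"
  proof -
    have "real m \<le> (real m)\<^sup>2" using m1 by (simp add: power2_eq_square)
    then have "4 / \<delta> \<le> (real m)\<^sup>2" using m4 by linarith
    then show ?thesis using dl mp by (simp add: field_simps)
  qed
  define M where "M = \<lceil>B * real m\<rceil>"
  define Kset where "Kset = {-M..M}"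
  have Kfin: "finite Kset" by (simp add: Kset_def)
  have M0: "0 \<le> M"
  proof -
    have "0 \<le> B * real m" using B0 mp by simp
    then show ?thesis unfolding M_def by linarith
  qed
  have rng: "\<lfloor>real m * g z\<rfloor> \<in> Kset" for z
  proof -
    have "\<bar>real m * g z\<bar> \<le> B * real m" using gB[of z] mp by (simp add: abs_mult mult.commute mult_left_mono)
    then have a: "- (B * real m) \<le> real m * g z" "real m * g z \<le> B * real m" by linarith+
    have "\<lfloor>real m * g z\<rfloor> \<le> M" unfolding M_def using a(2) by (meson floor_le_ceiling floor_mono le_ceiling_iff order_trans)
    moreover have "\<lfloor>- (B * real m)\<rfloor> \<le> \<lfloor>real m * g z\<rfloor>" using a(1) by (rule floor_mono)
    then have "- M \<le> \<lfloor>real m * g z\<rfloor>" unfolding M_def by (simp add: floor_minus)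
    ultimately show ?thesis by (simp add: Kset_def)
  qed
  define cs where "cs k = real_of_int k / real m" for k
  define Cm where "Cm = (\<Sum>k\<in>Kset. \<bar>cs k\<bar>)"
  have Cm0: "0 \<le> Cm" unfolding Cm_def by (simp add: sum_nonneg)
  define \<eta> where "\<eta> = \<delta> / (4 * (Cm * Cm + 1))"
  have eta0: "\<eta> > 0" unfolding \<eta>_def using dl Cm0 by (simp add: add_nonneg_pos)
  define A where "A k = {z \<in> Q01. \<lfloor>real m * g z\<rfloor> = k}" for k
  have Ab: "A k \<in> sets borel" for k unfolding A_def using Q01_borel by measurable
  have AQ: "A k \<subseteq> Q01" for k unfolding A_def by blast
  have Asym: "(b, a) \<in> A k" if "(a, b) \<in> A k" for a b k
    using that gs[of a b] unfolding A_def Q01_def by auto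
  have "\<forall>k\<in>Kset. \<exists>K U N0. K \<subseteq> A k \<and> A k \<subseteq> U \<and> U \<in> sets borel \<and> K \<in> sets borel \<and>
           (\<forall>a b. (a, b) \<in> K \<longrightarrow> (b, a) \<in> K) \<and> emeasure lborel (U - K) < ennreal \<eta> \<and>
           N0 \<ge> 1 \<and> (\<forall>N\<ge>N0. cellcover N K \<subseteq> U)"
    using set_approx[OF Ab AQ Asym eta0] by blast
  then have "\<forall>k\<in>Kset. \<exists>t. fst t \<subseteq> A k \<and> A k \<subseteq> fst (snd t) \<and> fst (snd t) \<in> sets borel \<and> fst t \<in> sets borel \<and>
           (\<forall>a b. (a, b) \<in> fst t \<longrightarrow> (b, a) \<in> fst t) \<and> emeasure lborel (fst (snd t) - fst t) < ennreal \<eta> \<and>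
           snd (snd t) \<ge> 1 \<and> (\<forall>N\<ge>snd (snd t). cellcover N (fst t) \<subseteq> fst (snd t))"
    by (metis fst_conv snd_conv)
  then obtain F where F: "\<forall>k\<in>Kset. fst (F k) \<subseteq> A k \<and> A k \<subseteq> fst (snd (F k)) \<and> fst (snd (F k)) \<in> sets borel \<and> fst (F k) \<in> sets borel \<and>
           (\<forall>a b. (a, b) \<in> fst (F k) \<longrightarrow> (b, a) \<in> fst (F k)) \<and> emeasure lborel (fst (snd (F k)) - fst (F k)) < ennreal \<eta> \<and>
           snd (snd (F k)) \<ge> 1 \<and> (\<forall>N\<ge>snd (snd (F k)). cellcover N (fst (F k)) \<subseteq> fst (snd (F k)))"
    by (rule bchoice[THEN exE]) blast
  define KK where "KK k = fst (F k)" for k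
  define UU where "UU k = fst (snd (F k))" for k
  define N0 where "N0 k = snd (snd (F k))" for k
  have KKA: "KK k \<subseteq> A k" and AUU: "A k \<subseteq> UU k" and UUb: "UU k \<in> sets borel" and KKb: "KK k \<in> sets borel"
    and KKs: "\<And>a b. (a, b) \<in> KK k \<Longrightarrow> (b, a) \<in> KK k" and Em: "emeasure lborel (UU k - KK k) < ennreal \<eta>"
    and N01: "N0 k \<ge> 1" and cov: "\<And>N. N \<ge> N0 k \<Longrightarrow> cellcover N (KK k) \<subseteq> UU k" if "k \<in> Kset" for k
    using F that unfolding KK_def UU_def N0_def by blast+
  have Kne: "0 \<in> Kset" using M0 by (simp add: Kset_def)
  define N where "N = Max (N0 ` Kset)"
  have NN0: "N0 k \<le> N" if "k \<in> Kset" for k unfolding N_def using Kfin that by simp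
  have N1: "N \<ge> 1" using NN0[OF Kne] N01[OF Kne] by simp
  define a where "a i j = (\<Sum>k\<in>Kset. cs k * (if cell N i j \<inter> KK k \<noteq> {} then 1 else 0))" for i j
  have asym: "a i j = a j i" for i j
    unfolding a_def using cell_K_sym[OF KKs] by (intro sum.cong refl) auto
  define CC where "CC k = cellcover N (KK k)" for k
  have Srepr: "induced_graphon N a (fst z) (snd z) = (\<Sum>k\<in>Kset. cs k * indicator (CC k) z)" for z
    unfolding a_def CC_def using S_repr[OF N1 Kfin] by blast
  define G where "G z = 2 / (real m)\<^sup>2 * indicator Q01 z + 2 * Cm * (\<Sum>k\<in>Kset. \<bar>cs k\<bar> * indicator (UU k - KK k) z)" for z
  have bound: "(induced_graphon N a (fst z) (snd z) - g z)\<^sup>2 \<le> G z" for z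
  proof -
    have "((\<Sum>k\<in>Kset. (real_of_int k / real m) * indicator (CC k) z) - g z)\<^sup>2
     \<le> 2 / (real m)\<^sup>2 * indicator Q01 z
        + 2 * (\<Sum>k\<in>Kset. \<bar>real_of_int k / real m\<bar>) * (\<Sum>k\<in>Kset. \<bar>real_of_int k / real m\<bar> * indicator (UU k - KK k) z)"
    proof (rule pointwise_bound[OF m1 Kfin rng g0])
      fix k assume k: "k \<in> Kset"
      show "KK k \<subseteq> {z \<in> Q01. \<lfloor>real m * g z\<rfloor> = k}" using KKA[OF k] A_def by simp
      show "{z \<in> Q01. \<lfloor>real m * g z\<rfloor> = k} \<subseteq> UU k" using AUU[OF k] A_def by simp
      show "KK k \<subseteq> CC k" unfolding CC_def using cellcover_sup[OF N1] KKA[OF k] AQ by blast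
      show "CC k \<subseteq> UU k" unfolding CC_def using cov[OF k NN0[OF k]] .
    next
      fix k show "CC k \<subseteq> Q01" unfolding CC_def by (rule cellcover_Q01)
    qed
    then show ?thesis unfolding Srepr G_def cs_def Cm_def .
  qed
  have Eb: "UU k - KK k \<in> sets borel" if "k \<in> Kset" for k using UUb[OF that] KKb[OF that] by auto
  have Efin: "emeasure lborel (UU k - KK k) < \<infinity>" if "k \<in> Kset" for k
    using Em[OF that] by (simp add: less_le_trans)
  have Emeas: "measure lborel (UU k - KK k) \<le> \<eta>" if "k \<in> Kset" for k
    using Em[OF that] eta0 by (simp add: measure_def enn2real_leI less_imp_le)
  have intQ: "integrable lborel (indicator Q01 :: real \<times> real \<Rightarrow> real)"
    using Q01_borel emeasure_Q01 by (intro integrable_real_indicator) auto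
  have intE: "integrable lborel (indicator (UU k - KK k) :: real \<times> real \<Rightarrow> real)" if "k \<in> Kset" for k
    using Eb[OF that] Efin[OF that] by (intro integrable_real_indicator) auto
  have i1: "integrable lborel (\<lambda>z. 2 / (real m)\<^sup>2 * indicator Q01 z :: real)"
    using intQ by (rule integrable_mult_right)
  have i2: "integrable lborel (\<lambda>z. \<Sum>k\<in>Kset. \<bar>cs k\<bar> * indicator (UU k - KK k) z :: real)"
  proof (rule Bochner_Integration.integrable_sum[where f="\<lambda>k z. \<bar>cs k\<bar> * indicator (UU k - KK k) z"])
    fix k assume "k \<in> Kset"
    then show "integrable lborel (\<lambda>z. \<bar>cs k\<bar> * indicator (UU k - KK k) z :: real)"
      using intE by (intro integrable_mult_right) auto
  qed
  have intG: "integrable lborel G"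
    unfolding G_def using i1 integrable_mult_right[OF i2, of "2 * Cm"] by (rule Bochner_Integration.integrable_add)
  have "(LINT z|lborel. G z) = 2 / (real m)\<^sup>2 * measure lborel Q01
      + 2 * Cm * (\<Sum>k\<in>Kset. \<bar>cs k\<bar> * measure lborel (UU k - KK k))"
    unfolding G_def using i1 integrable_mult_right[OF i2, of "2 * Cm"] intE
    by (simp add: Bochner_Integration.integral_add Bochner_Integration.integral_sum)
  also have "\<dots> \<le> 2 / (real m)\<^sup>2 + 2 * Cm * (\<Sum>k\<in>Kset. \<bar>cs k\<bar> * \<eta>)"
    using Emeas Cm0 by (simp add: measure_Q01 sum_mono mult_left_mono)
  also have "\<dots> = 2 / (real m)\<^sup>2 + 2 * (Cm * Cm) * \<eta>"
  proof -
    have "(\<Sum>k\<in>Kset. \<bar>cs k\<bar> * \<eta>) = Cm * \<eta>" unfolding Cm_def by (rule sum_distrib_right[symmetric])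
    then show ?thesis by simp
  qed
  also have "2 * (Cm * Cm) * \<eta> \<le> \<delta> / 2"
  proof -
    have pos: "0 < Cm * Cm + 1" using Cm0 by (simp add: add_nonneg_pos)
    have "2 * (Cm * Cm) * \<eta> = \<delta> / 2 * ((Cm * Cm) / (Cm * Cm + 1))"
      unfolding \<eta>_def using pos by (simp add: divide_simps)
    also have "\<dots> \<le> \<delta> / 2 * 1"
      using dl pos by (intro mult_left_mono) (simp_all add: divide_simps)
    finally show ?thesis by simp
  qed
  finally have intle: "(LINT z|lborel. G z) \<le> \<delta>" using hm by linarith
  have G0: "0 \<le> G z" for z unfolding G_def using Cm0 by (intro add_nonneg_nonneg mult_nonneg_nonneg sum_nonneg) auto
  have "(\<integral>\<^sup>+z. ennreal ((induced_graphon N a (fst z) (snd z) - g z)\<^sup>2) \<partial>lborel) \<le> (\<integral>\<^sup>+z. ennreal (G z) \<partial>lborel)"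
    using bound by (intro nn_integral_mono ennreal_leI) auto
  also have "\<dots> = ennreal (LINT z|lborel. G z)"
    using intG G0 by (intro nn_integral_eq_integral) auto
  also have "\<dots> \<le> ennreal \<delta>" using intle by (rule ennreal_leI)
  finally show ?thesis using N1 asym by blast
qed


lemma fm_M01: "sigma_finite_measure M01"
proof -
  interpret finite_measure M01 by (rule fin_M01)
  show ?thesis by unfold_locales
qed

lemma id_M01: "(\<lambda>x::real. x) \<in> M01 \<rightarrow>\<^sub>M borel"
  using continuous_imp_measurable_on_sets_lebesgue[of "{0..1::real}" "\<lambda>x. x"] by (simp add: continuous_on_id)

lemma pair_M01: "(\<lambda>z::real\<times>real. z) \<in> (M01 \<Otimes>\<^sub>M M01) \<rightarrow>\<^sub>M borel"
proof -
  have "(\<lambda>z::real\<times>real. z) \<in> (M01 \<Otimes>\<^sub>M M01) \<rightarrow>\<^sub>M (borel \<Otimes>\<^sub>M borel)"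
    by (rule measurable_pair) (auto simp: comp_def intro!: measurable_compose[OF measurable_fst id_M01] measurable_compose[OF measurable_snd id_M01])
  then show ?thesis by (simp add: borel_prod)
qed

lemma borel_M01: "f \<in> borel_measurable borel \<Longrightarrow> f \<in> borel_measurable M01"
  using measurable_compose[OF id_M01] by blast

lemma kernel_meas:
  fixes K :: "real \<times> real \<Rightarrow> real"
  assumes K[measurable]: "K \<in> borel_measurable borel" and h: "sq_int h"
  shows "(\<lambda>v. LINT u|M01. K (v, u) * h u) \<in> borel_measurable M01"
proof -
  interpret sigma_finite_measure M01 by (rule fm_M01)
  have [measurable]: "h \<in> borel_measurable M01" using sq_int_meas[OF h] .
  have "(\<lambda>z. K z) \<in> borel_measurable (M01 \<Otimes>\<^sub>M M01)"
    using measurable_compose[OF pair_M01 K] by simp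
  then have [measurable]: "(\<lambda>(v,u). K (v,u) * h u) \<in> borel_measurable (M01 \<Otimes>\<^sub>M M01)"
    by (simp add: case_prod_beta') measurable
  show ?thesis by (rule borel_measurable_lebesgue_integral) simp
qed

lemma kernel_int:
  fixes K :: "real \<times> real \<Rightarrow> real"
  assumes K[measurable]: "K \<in> borel_measurable borel" and KB: "\<And>z. \<bar>K z\<bar> \<le> C" and h: "sq_int h"
  shows "integrable M01 (\<lambda>u. K (v, u) * h u)"
proof (rule Bochner_Integration.integrable_bound)
  show "integrable M01 (\<lambda>u. C * \<bar>h u\<bar>)" using sq_int_integrable[OF h] by simp
  have "(\<lambda>u. K (v, u)) \<in> borel_measurable M01" by (rule borel_M01) measurable
  then show "(\<lambda>u. K (v, u) * h u) \<in> borel_measurable M01" using sq_int_meas[OF h] by measurable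
  show "AE u in M01. norm (K (v, u) * h u) \<le> norm (C * \<bar>h u\<bar>)"
  proof (rule AE_I2)
    fix u
    have "\<bar>K (v, u)\<bar> * \<bar>h u\<bar> \<le> C * \<bar>h u\<bar>" using KB by (simp add: mult_right_mono)
    moreover have "0 \<le> C" using KB[of "(0,0)"] by linarith
    ultimately show "norm (K (v, u) * h u) \<le> norm (C * \<bar>h u\<bar>)" by (simp add: abs_mult)
  qed
qed

lemma kernel_sq:
  fixes K :: "real \<times> real \<Rightarrow> real"
  assumes K[measurable]: "K \<in> borel_measurable borel" and KB: "\<And>z. \<bar>K z\<bar> \<le> C" and h: "sq_int h"
  shows "sq_int (\<lambda>v. LINT u|M01. K (v, u) * h u)"
proof (rule sq_int_bounded[OF kernel_meas[OF K h]])
  fix v :: real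
  have "\<bar>LINT u|M01. K (v, u) * h u\<bar> \<le> (LINT u|M01. C * \<bar>h u\<bar>)"
  proof (rule integral_abs_bound_integral[OF kernel_int[OF K KB h]])
    show "integrable M01 (\<lambda>u. C * \<bar>h u\<bar>)" using sq_int_integrable[OF h] by simp
    fix u show "\<bar>K (v, u) * h u\<bar> \<le> C * \<bar>h u\<bar>" using KB by (simp add: abs_mult mult_right_mono)
  qed
  then show "\<bar>LINT u|M01. K (v, u) * h u\<bar> \<le> (LINT u|M01. C * \<bar>h u\<bar>)" .
qed

lemma nn_M01_le:
  fixes f :: "real \<Rightarrow> ennreal"
  shows "(\<integral>\<^sup>+x. f x \<partial>M01) \<le> (\<integral>\<^sup>+x. f x \<partial>lborel)"
proof -
  have "(\<integral>\<^sup>+x. f x \<partial>M01) = (\<integral>\<^sup>+x. f x * indicator {0..1} x \<partial>lebesgue)"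
    by (rule nn_integral_restrict_space) simp
  also have "\<dots> \<le> (\<integral>\<^sup>+x. f x \<partial>lebesgue)"
    by (intro nn_integral_mono) (simp add: indicator_def)
  also have "\<dots> = (\<integral>\<^sup>+x. f x \<partial>lborel)" by (rule nn_integral_completion)
  finally show ?thesis .
qed

lemma HS_bound:
  fixes D :: "real \<times> real \<Rightarrow> real"
  assumes D[measurable]: "D \<in> borel_measurable borel" and DB: "\<And>z. \<bar>D z\<bar> \<le> C" and h: "sq_int h"
    and dl: "(\<integral>\<^sup>+z. ennreal ((D z)\<^sup>2) \<partial>lborel) \<le> ennreal \<delta>" and d0: "0 \<le> \<delta>"
  shows "l2_norm (\<lambda>v. LINT u|M01. D (v, u) * h u) \<le> sqrt \<delta> * l2_norm h"
proof -
  define T where "T v = (LINT u|M01. D (v, u) * h u)" for v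
  define \<Phi> where "\<Phi> v = (LINT u|M01. (D (v, u))\<^sup>2 * 1)" for v
  have C0: "0 \<le> C" using DB[of "(0,0)"] by linarith
  have Dv: "sq_int (\<lambda>u. D (v, u))" for v
  proof (rule sq_int_bounded)
    show "(\<lambda>u. D (v, u)) \<in> borel_measurable M01" by (rule borel_M01) measurable
    show "\<bar>D (v, u)\<bar> \<le> C" for u by (rule DB)
  qed
  have D2m[measurable]: "(\<lambda>z. (D z)\<^sup>2) \<in> borel_measurable borel" by measurable
  have D2B: "\<bar>(D z)\<^sup>2\<bar> \<le> C\<^sup>2" for z
  proof -
    have "\<bar>D z\<bar>^2 \<le> C^2" using DB[of z] by (intro power_mono) auto
    then show ?thesis by simp
  qed
  have Ts: "sq_int T" unfolding T_def using kernel_sq[OF D DB h] .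
  have Phis: "sq_int \<Phi>" unfolding \<Phi>_def using kernel_sq[OF D2m D2B sq_int_const[of 1]] .
  have pt: "(T v)\<^sup>2 \<le> \<Phi> v * (l2_norm h)\<^sup>2" for v
  proof -
    have "\<bar>T v\<bar> = \<bar>l2_inner (\<lambda>u. D (v, u)) h\<bar>" by (simp add: T_def l2_inner_def)
    also have "\<dots> \<le> l2_norm (\<lambda>u. D (v, u)) * l2_norm h" by (rule l2_CS[OF Dv h])
    finally have "\<bar>T v\<bar> \<le> l2_norm (\<lambda>u. D (v, u)) * l2_norm h" .
    then have "\<bar>T v\<bar>\<^sup>2 \<le> (l2_norm (\<lambda>u. D (v, u)) * l2_norm h)\<^sup>2" by (intro power_mono) auto
    also have "\<dots> = \<Phi> v * (l2_norm h)\<^sup>2"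
      unfolding power_mult_distrib l2_norm_sq by (simp add: \<Phi>_def l2_inner_def power2_eq_square)
    finally show ?thesis by simp
  qed
  have Phi0: "0 \<le> \<Phi> v" for v unfolding \<Phi>_def by (intro integral_nonneg_AE AE_I2) simp
  have Phi_int: "integrable M01 \<Phi>" using sq_int_integrable[OF Phis] .
  have "ennreal (LINT v|M01. \<Phi> v) = (\<integral>\<^sup>+v. ennreal (\<Phi> v) \<partial>M01)"
    using Phi_int Phi0 by (intro nn_integral_eq_integral[symmetric]) auto
  also have "\<dots> \<le> (\<integral>\<^sup>+v. (\<integral>\<^sup>+u. ennreal ((D (v, u))\<^sup>2) \<partial>lborel) \<partial>M01)"
  proof (intro nn_integral_mono)
    fix v
    have "ennreal (\<Phi> v) = (\<integral>\<^sup>+u. ennreal ((D (v, u))\<^sup>2 * 1) \<partial>M01)"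
      unfolding \<Phi>_def using kernel_int[OF D2m D2B sq_int_const[of 1]]
      by (intro nn_integral_eq_integral[symmetric]) auto
    also have "\<dots> \<le> (\<integral>\<^sup>+u. ennreal ((D (v, u))\<^sup>2) \<partial>lborel)"
      using nn_M01_le[of "\<lambda>u. ennreal ((D (v, u))\<^sup>2)"] by simp
    finally show "ennreal (\<Phi> v) \<le> (\<integral>\<^sup>+u. ennreal ((D (v, u))\<^sup>2) \<partial>lborel)" .
  qed
  also have "\<dots> \<le> (\<integral>\<^sup>+v. (\<integral>\<^sup>+u. ennreal ((D (v, u))\<^sup>2) \<partial>lborel) \<partial>lborel)"
    by (rule nn_M01_le)
  also have "\<dots> = (\<integral>\<^sup>+z. ennreal ((D z)\<^sup>2) \<partial>(lborel \<Otimes>\<^sub>M lborel))"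
  proof -
    have "(\<lambda>z. ennreal ((D z)\<^sup>2)) \<in> borel_measurable (lborel \<Otimes>\<^sub>M lborel)"
      unfolding lborel_prod by measurable
    then show ?thesis using lborel.nn_integral_fst[of "\<lambda>z. ennreal ((D z)\<^sup>2)" lborel] by simp
  qed
  also have "\<dots> = (\<integral>\<^sup>+z. ennreal ((D z)\<^sup>2) \<partial>lborel)" unfolding lborel_prod ..
  also have "\<dots> \<le> ennreal \<delta>" by (rule dl)
  finally have "ennreal (LINT v|M01. \<Phi> v) \<le> ennreal \<delta>" .
  then have Phib: "(LINT v|M01. \<Phi> v) \<le> \<delta>" using d0 by (simp add: ennreal_le_iff)
  have "(l2_norm T)\<^sup>2 = (LINT v|M01. (T v)\<^sup>2)"
    unfolding l2_norm_sq l2_inner_def by (simp add: power2_eq_square)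
  also have "\<dots> \<le> (LINT v|M01. \<Phi> v * (l2_norm h)\<^sup>2)"
    using sq_int_sq[OF Ts] Phi_int pt by (intro integral_mono) auto
  also have "\<dots> = (LINT v|M01. \<Phi> v) * (l2_norm h)\<^sup>2" by simp
  also have "\<dots> \<le> \<delta> * (l2_norm h)\<^sup>2" using Phib by (intro mult_right_mono) auto
  also have "\<dots> = (sqrt \<delta> * l2_norm h)\<^sup>2" using d0 by (simp add: power_mult_distrib)
  finally have "(l2_norm T)\<^sup>2 \<le> (sqrt \<delta> * l2_norm h)\<^sup>2" .
  then have "l2_norm T \<le> sqrt \<delta> * l2_norm h"
    by (rule power2_le_imp_le) (use l2_norm_nonneg d0 in simp)
  then show ?thesis unfolding T_def .
qed

lemma AE_swap_lborel:
  assumes "AE z in (lborel :: (real \<times> real) measure). P z"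
  shows "AE z in (lborel :: (real \<times> real) measure). P (snd z, fst z)"
proof -
  have "AE z in (lborel \<Otimes>\<^sub>M lborel :: (real \<times> real) measure). P z" using assms unfolding lborel_prod .
  then have "AE z in distr (lborel \<Otimes>\<^sub>M lborel) (lborel \<Otimes>\<^sub>M lborel) (\<lambda>(x, y). (y, x)). P z"
    by (subst lborel_pair.distr_pair_swap[symmetric])
  then have "AE z in (lborel \<Otimes>\<^sub>M lborel :: (real \<times> real) measure). P ((\<lambda>(x, y). (y, x)) z)"
    by (rule AE_distrD[rotated]) measurable
  then show ?thesis unfolding lborel_prod by (simp add: case_prod_beta')
qed

lemma borel_version:
  assumes W: "graphon W"
  shows "\<exists>g B. g \<in> borel_measurable borel \<and> (\<forall>z. \<bar>g z\<bar> \<le> B) \<and> (\<forall>z. z \<notin> Q01 \<longrightarrow> g z = 0) \<and>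
     (\<forall>a b. g (a, b) = g (b, a)) \<and> (AE z in lborel. z \<in> Q01 \<longrightarrow> W (fst z) (snd z) = g z)"
proof -
  define S2 where "S2 = {0..1::real} \<times> {0..1::real}"
  have Wm: "(\<lambda>(u,v). W u v) \<in> borel_measurable (lebesgue_on S2)" using W unfolding graphon_def S2_def by blast
  obtain B where B: "\<forall>u\<in>{0..1}. \<forall>v\<in>{0..1}. \<bar>W u v\<bar> \<le> B" using W unfolding graphon_def by blast
  have B0: "0 \<le> B" using B by (metis abs_ge_zero atLeastAtMost_iff order_trans zero_le_one order_refl)
  have Wsym: "\<forall>u\<in>{0..1}. \<forall>v\<in>{0..1}. W u v = W v u" using W unfolding graphon_def by blast
  have S2l: "S2 \<in> sets lebesgue" unfolding S2_def
  proof -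
    have "{0..1::real} \<times> {0..1::real} \<in> sets (borel \<Otimes>\<^sub>M borel)" by (intro pair_measureI) auto
    then have "{0..1::real} \<times> {0..1::real} \<in> sets borel" by (simp only: borel_prod)
    then show "{0..1::real} \<times> {0..1::real} \<in> sets lebesgue" by simp
  qed
  have "(\<lambda>x. indicator S2 x *\<^sub>R (case x of (u, v) \<Rightarrow> W u v)) \<in> borel_measurable lebesgue"
    using Wm borel_measurable_restrict_space_iff[of S2 lebesgue "\<lambda>(u,v). W u v"] S2l by simp
  then have m1: "(\<lambda>x. indicator S2 x * W (fst x) (snd x)) \<in> borel_measurable lebesgue"
    by (simp add: case_prod_beta')
  define F where "F x = indicator Q01 x * W (fst x) (snd x)" for x
  have QS: "Q01 \<subseteq> S2" unfolding Q01_def S2_def by auto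
  have "F = (\<lambda>x. indicator Q01 x * (indicator S2 x * W (fst x) (snd x)))"
    using QS by (auto simp: F_def indicator_def fun_eq_iff)
  moreover have "(\<lambda>x. indicator Q01 x * (indicator S2 x * W (fst x) (snd x))) \<in> borel_measurable lebesgue"
  proof (rule borel_measurable_times[OF _ m1])
    show "indicator Q01 \<in> borel_measurable lebesgue" using Q01_borel by (intro borel_measurable_indicator) simp
  qed
  ultimately have Fm: "F \<in> borel_measurable (completion lborel)" by simp
  obtain g' where g': "g' \<in> borel_measurable lborel" "AE x in lborel. F x = g' x"
    using completion_ex_borel_measurable_real[OF Fm] by blast
  have g'm[measurable]: "g' \<in> borel_measurable borel" using g'(1) by simp
  define g1 where "g1 x = indicator Q01 x * max (-B) (min B (g' x))" for x
  have QB: "\<bar>W (fst x) (snd x)\<bar> \<le> B" if "x \<in> Q01" for x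
    using that B by (auto simp: Q01_def mem_Times_iff)
  have Fg1: "AE x in lborel. F x = g1 x"
    using g'(2)
  proof (rule eventually_mono)
    fix x assume "F x = g' x"
    then show "F x = g1 x" using QB[of x] unfolding F_def g1_def
      by (cases "x \<in> Q01") (auto simp: indicator_def)
  qed
  have Fswap: "F (snd x, fst x) = F x" for x
  proof (cases "x \<in> Q01")
    case True
    then have "(snd x, fst x) \<in> Q01" "fst x \<in> {0..1}" "snd x \<in> {0..1}" by (auto simp: Q01_def mem_Times_iff)
    then show ?thesis using True Wsym unfolding F_def by simp
  next
    case False
    then have "(snd x, fst x) \<notin> Q01" by (auto simp: Q01_def mem_Times_iff)
    then show ?thesis using False unfolding F_def by simp
  qed
  have Fg1s: "AE x in lborel. F (snd x, fst x) = g1 (snd x, fst x)"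
    using AE_swap_lborel[OF Fg1] by simp
  define g where "g x = (g1 x + g1 (snd x, fst x)) / 2" for x
  have g1m: "g1 \<in> borel_measurable borel" unfolding g1_def using Q01_borel by measurable
  have swm: "(\<lambda>x::real\<times>real. (snd x, fst x)) \<in> borel \<rightarrow>\<^sub>M borel"
    by (intro borel_measurable_continuous_onI continuous_intros)
  have g1sm: "(\<lambda>x. g1 (snd x, fst x)) \<in> borel_measurable borel"
    using measurable_compose[OF swm g1m] by simp
  have gm: "g \<in> borel_measurable borel" unfolding g_def using g1m g1sm by measurable
  have gB: "\<bar>g z\<bar> \<le> B" for z
  proof -
    have b: "\<bar>g1 y\<bar> \<le> B" for y using B0 unfolding g1_def by (auto simp: indicator_def)
    have "\<bar>g1 z + g1 (snd z, fst z)\<bar> \<le> 2 * B"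
      using abs_triangle_ineq[of "g1 z" "g1 (snd z, fst z)"] b[of z] b[of "(snd z, fst z)"] by linarith
    then show ?thesis unfolding g_def by simp
  qed
  have g0: "g z = 0" if "z \<notin> Q01" for z
  proof -
    have "(snd z, fst z) \<notin> Q01" using that by (auto simp: Q01_def mem_Times_iff)
    then show ?thesis using that unfolding g_def g1_def by simp
  qed
  have gs: "g (a, b) = g (b, a)" for a b unfolding g_def by simp
  have "AE z in lborel. z \<in> Q01 \<longrightarrow> W (fst z) (snd z) = g z"
    using Fg1 Fg1s
  proof (eventually_elim)
    case (elim z)
    show ?case
    proof
      assume "z \<in> Q01"
      then have "F z = W (fst z) (snd z)" unfolding F_def by simp
      moreover have "g z = (F z + F (snd z, fst z)) / 2" unfolding g_def using elim by simp
      ultimately show "W (fst z) (snd z) = g z" using Fswap[of z] by simp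
    qed
  qed
  then show ?thesis using gm gB g0 gs by blast
qed

lemma AE_lborel_M01:
  assumes "AE x in lborel. P x"
  shows "AE x in M01. P x"
proof -
  have "AE x in lebesgue. P x" using assms by (rule AE_completion)
  then have "AE x in lebesgue. x \<in> {0..1} \<longrightarrow> P x" by (auto elim: eventually_mono)
  then show ?thesis by (subst AE_restrict_space_iff) auto
qed

lemma T_ae:
  fixes g :: "real \<times> real \<Rightarrow> real"
  assumes gm[measurable]: "g \<in> borel_measurable borel" and gB: "\<And>z. \<bar>g z\<bar> \<le> B"
    and AEg: "AE z in lborel. z \<in> Q01 \<longrightarrow> W (fst z) (snd z) = g z" and h: "sq_int h"
  shows "AE v in M01. T_op W h v = (LINT u|M01. g (v, u) * h u)"
proof -
  have "AE z in (lborel \<Otimes>\<^sub>M lborel :: (real \<times> real) measure). z \<in> Q01 \<longrightarrow> W (fst z) (snd z) = g z"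
    using AEg unfolding lborel_prod .
  then have "AE v in lborel. AE u in lborel. (v, u) \<in> Q01 \<longrightarrow> W v u = g (v, u)"
    using lborel_pair.AE_pair by fastforce
  then have G: "AE v in M01. AE u in lborel. (v, u) \<in> Q01 \<longrightarrow> W v u = g (v, u)"
    by (rule AE_lborel_M01)
  have N1: "AE v in M01. v \<noteq> 1" using AE_lborel_singleton[of "1::real"] by (rule AE_lborel_M01)
  have I: "AE v in M01. v \<in> {0..1}" by (rule AE_I2) simp
  show ?thesis
    using G N1 I
  proof (eventually_elim)
    case (elim v)
    then have v: "v \<in> {0..<1}" by auto
    have "AE u in M01. (v, u) \<in> Q01 \<longrightarrow> W v u = g (v, u)" using elim(1) by (rule AE_lborel_M01)
    moreover have "AE u in M01. u \<noteq> 1" using AE_lborel_singleton[of "1::real"] by (rule AE_lborel_M01)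
    moreover have "AE u in M01. u \<in> {0..1}" by (rule AE_I2) simp
    ultimately have ae: "AE u in M01. g (v, u) * h u = W v u * h u"
    proof (eventually_elim)
      case (elim u)
      then have "(v, u) \<in> Q01" using v by (auto simp: Q01_def)
      then show ?case using elim by simp
    qed
    have m1: "(\<lambda>u. g (v, u) * h u) \<in> borel_measurable M01"
      using kernel_int[OF gm gB h] by (rule borel_measurable_integrable)
    have m2: "(\<lambda>u. W v u * h u) \<in> borel_measurable M01" using meas_ae[OF m1 ae] .
    have "(LINT u|M01. W v u * h u) = (LINT u|M01. g (v, u) * h u)"
      using m1 m2 ae by (intro integral_cong_AE) (auto elim: eventually_mono)
    then show ?case by (simp add: T_op_def)
  qed
qed

lemma fst_borel[measurable]: "(fst :: real \<times> real \<Rightarrow> real) \<in> borel_measurable borel"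
  by (intro borel_measurable_continuous_onI continuous_intros)

lemma snd_borel[measurable]: "(snd :: real \<times> real \<Rightarrow> real) \<in> borel_measurable borel"
  by (intro borel_measurable_continuous_onI continuous_intros)

lemma step_op_approx:
  assumes W: "graphon W" and e: "\<epsilon> > 0"
  shows "\<exists>N\<ge>1. \<exists>a. (\<forall>i j. a i j = a j i) \<and> (\<forall>h. sq_int h \<longrightarrow>
      sq_int (T_op (induced_graphon N a) h) \<and>
      l2_norm (\<lambda>x. T_op (induced_graphon N a) h x - T_op W h x) \<le> \<epsilon> * l2_norm h)"
proof -
  obtain g B where gm[measurable]: "g \<in> borel_measurable borel" and gB: "\<And>z. \<bar>g z\<bar> \<le> B"
    and g0: "\<And>z. z \<notin> Q01 \<Longrightarrow> g z = 0" and gs: "\<And>a b. g (a, b) = g (b, a)"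
    and AEg: "AE z in lborel. z \<in> Q01 \<longrightarrow> W (fst z) (snd z) = g z"
    using borel_version[OF W] by blast
  have e2: "\<epsilon>\<^sup>2 > 0" using e by simp
  obtain N a where N1: "N \<ge> 1" and asym: "\<forall>i j. a i j = a j i"
    and dl: "(\<integral>\<^sup>+z. ennreal ((induced_graphon N a (fst z) (snd z) - g z)\<^sup>2) \<partial>lborel) \<le> ennreal (\<epsilon>\<^sup>2)"
    using step_approx[OF gm gB g0 gs e2] by blast
  define S where "S z = induced_graphon N a (fst z) (snd z)" for z
  have Sm[measurable]: "S \<in> borel_measurable borel" unfolding S_def induced_graphon_def by measurable
  define A0 where "A0 = (\<Sum>i\<in>{1..N}. \<Sum>j\<in>{1..N}. \<bar>a i j\<bar>)"
  have SB: "\<bar>S z\<bar> \<le> A0" for z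
  proof (cases "fst z \<in> {0..<1} \<and> snd z \<in> {0..<1}")
    case True
    then have i: "idx N (fst z) \<in> {1..N}" "idx N (snd z) \<in> {1..N}" using idx_in[OF N1] by auto
    have "\<bar>a (idx N (fst z)) (idx N (snd z))\<bar> \<le> (\<Sum>j\<in>{1..N}. \<bar>a (idx N (fst z)) j\<bar>)"
      using i by (intro member_le_sum) auto
    also have "\<dots> \<le> A0" unfolding A0_def using i
      by (intro member_le_sum[of _ _ "\<lambda>i. \<Sum>j\<in>{1..N}. \<bar>a i j\<bar>"]) (auto intro: sum_nonneg)
    finally show ?thesis using True by (simp add: S_def induced_eq[OF N1])
  next
    case False
    have "0 \<le> A0" unfolding A0_def by (intro sum_nonneg) auto
    then show ?thesis using False by (auto simp: S_def induced_eq[OF N1])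
  qed
  define D where "D z = S z - g z" for z
  have Dm[measurable]: "D \<in> borel_measurable borel" unfolding D_def by measurable
  have DB: "\<bar>D z\<bar> \<le> A0 + B" for z unfolding D_def using SB[of z] gB[of z] by linarith
  have dl': "(\<integral>\<^sup>+z. ennreal ((D z)\<^sup>2) \<partial>lborel) \<le> ennreal (\<epsilon>\<^sup>2)"
    using dl by (simp add: D_def S_def)
  have main: "sq_int (T_op (induced_graphon N a) h) \<and>
      l2_norm (\<lambda>x. T_op (induced_graphon N a) h x - T_op W h x) \<le> \<epsilon> * l2_norm h" if h: "sq_int h" for h
  proof -
    have TS: "T_op (induced_graphon N a) h = (\<lambda>v. LINT u|M01. S (v, u) * h u)"
      by (simp add: T_op_def S_def)
    have TSs: "sq_int (T_op (induced_graphon N a) h)" unfolding TS using kernel_sq[OF Sm SB h] .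
    define Tg where "Tg = (\<lambda>v. LINT u|M01. g (v, u) * h u)"
    have Tgs: "sq_int Tg" unfolding Tg_def using kernel_sq[OF gm gB h] .
    have diff: "(\<lambda>v. T_op (induced_graphon N a) h v - Tg v) = (\<lambda>v. LINT u|M01. D (v, u) * h u)"
    proof
      fix v
      have "(LINT u|M01. S (v, u) * h u) - (LINT u|M01. g (v, u) * h u) = (LINT u|M01. S (v, u) * h u - g (v, u) * h u)"
        using kernel_int[OF Sm SB h] kernel_int[OF gm gB h] by (rule Bochner_Integration.integral_diff[symmetric])
      then show "T_op (induced_graphon N a) h v - Tg v = (LINT u|M01. D (v, u) * h u)"
        unfolding TS Tg_def D_def by (simp add: left_diff_distrib)
    qed
    have "l2_norm (\<lambda>v. LINT u|M01. D (v, u) * h u) \<le> sqrt (\<epsilon>\<^sup>2) * l2_norm h"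
      using HS_bound[OF Dm DB h dl'] e by simp
    then have b: "l2_norm (\<lambda>v. T_op (induced_graphon N a) h v - Tg v) \<le> \<epsilon> * l2_norm h"
      unfolding diff using e by simp
    have "AE v in M01. T_op W h v = Tg v" unfolding Tg_def using T_ae[OF gm gB AEg h] .
    then have ae: "ae_eq (\<lambda>v. T_op (induced_graphon N a) h v - Tg v) (\<lambda>v. T_op (induced_graphon N a) h v - T_op W h v)"
      unfolding ae_eq_def by (auto elim: eventually_mono)
    have "l2_norm (\<lambda>v. T_op (induced_graphon N a) h v - Tg v) = l2_norm (\<lambda>v. T_op (induced_graphon N a) h v - T_op W h v)"
      using l2_norm_ae[OF sq_int_diff[OF TSs Tgs] ae] .
    then show ?thesis using TSs b by simp
  qed
  show ?thesis using N1 asym main by blast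
qed


theorem proposition4p12:
  fixes D :: "(real \<Rightarrow> real) set" and L :: "(real \<Rightarrow> real) \<Rightarrow> (real \<Rightarrow> real)"
  assumes "unbounded_GSO D L"
  shows "\<exists>(N :: nat \<Rightarrow> nat) (\<Delta> :: nat \<Rightarrow> nat \<Rightarrow> nat \<Rightarrow> real).
           (\<forall>n. is_GSO (N n) (\<Delta> n)) \<and> graphs_converge_U N \<Delta> D L"
proof -
  have sa: "self_adjoint_op D L" using uGSO_sa[OF assms] .
  define Wf where "Wf n = (SOME W. good_W D L (real n + 1) W)" for n :: nat
  have Wg: "good_W D L (real n + 1) (Wf n)" for n
  proof -
    have "\<exists>W. good_W D L (real n + 1) W" using uGSO_good[OF assms] by simp
    then show ?thesis unfolding Wf_def by (rule someI_ex)
  qed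
  have Wgr: "graphon (Wf n)" for n using Wg[of n] unfolding good_W_def by blast
  have "\<forall>n. \<exists>p. fst p \<ge> 1 \<and> (\<forall>i j. snd p i j = snd p j i) \<and> (\<forall>h. sq_int h \<longrightarrow>
      sq_int (T_op (induced_graphon (fst p) (snd p)) h) \<and>
      l2_norm (\<lambda>x. T_op (induced_graphon (fst p) (snd p)) h x - T_op (Wf n) h x) \<le> (1 / (real n + 1)) * l2_norm h)"
  proof
    fix n
    have "1 / (real n + 1) > 0" by simp
    from step_op_approx[OF Wgr this] obtain N a where Na: "N \<ge> 1" "\<forall>i j. a i j = a j i" "\<forall>h. sq_int h \<longrightarrow>
      sq_int (T_op (induced_graphon N a) h) \<and>
      l2_norm (\<lambda>x. T_op (induced_graphon N a) h x - T_op (Wf n) h x) \<le> (1 / (real n + 1)) * l2_norm h" by blast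
    show "\<exists>p. fst p \<ge> 1 \<and> (\<forall>i j. snd p i j = snd p j i) \<and> (\<forall>h. sq_int h \<longrightarrow>
      sq_int (T_op (induced_graphon (fst p) (snd p)) h) \<and>
      l2_norm (\<lambda>x. T_op (induced_graphon (fst p) (snd p)) h x - T_op (Wf n) h x) \<le> (1 / (real n + 1)) * l2_norm h)"
      using Na by (intro exI[of _ "(N, a)"]) simp
  qed
  from choice[OF this] obtain F where F0: "\<forall>n. fst (F n) \<ge> 1 \<and> (\<forall>i j. snd (F n) i j = snd (F n) j i) \<and> (\<forall>h. sq_int h \<longrightarrow>
      sq_int (T_op (induced_graphon (fst (F n)) (snd (F n))) h) \<and>
      l2_norm (\<lambda>x. T_op (induced_graphon (fst (F n)) (snd (F n))) h x - T_op (Wf n) h x) \<le> (1 / (real n + 1)) * l2_norm h)"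
    by (elim exE)
  note F = F0[rule_format]
  define Nf where "Nf n = fst (F n)" for n
  define af where "af n = snd (F n)" for n
  define \<Delta> where "\<Delta> n = (\<lambda>i j. af n i j / real (Nf n))" for n
  have N1: "Nf n \<ge> 1" for n unfolding Nf_def using F[of n] by blast
  have asym: "af n i j = af n j i" for n i j unfolding af_def using F[of n] by blast
  have Ksq: "sq_int h \<Longrightarrow> sq_int (T_op (induced_graphon (Nf n) (af n)) h)" for n h
    unfolding Nf_def af_def using F[of n] by blast
  have Kb: "sq_int h \<Longrightarrow> l2_norm (\<lambda>x. T_op (induced_graphon (Nf n) (af n)) h x - T_op (Wf n) h x) \<le> (1 / (real n + 1)) * l2_norm h" for n h
    unfolding Nf_def af_def using F[of n] by blast
  have GSO: "is_GSO (Nf n) (\<Delta> n)" for n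
    unfolding is_GSO_def \<Delta>_def using N1[of n] asym by simp
  have pm: "perm_mat id (GWM (Nf n) (\<Delta> n)) = af n" for n
    using N1[of n] by (auto simp: perm_mat_def GWM_def \<Delta>_def fun_eq_iff)
  have conv: "graphs_converge_U Nf \<Delta> D L"
    unfolding graphs_converge_U_def
  proof (intro exI[of _ "\<lambda>n. id"] conjI allI impI)
    fix n show "id permutes {1..Nf n}" by (rule permutes_id)
  next
    fix lam e :: real assume lam: "lam > 0" and e: "e > 0"
    obtain Wl where Wl: "good_W D L lam Wl" using uGSO_good[OF assms lam] by blast
    define n0 where "n0 = max (nat \<lceil>lam\<rceil>) (nat \<lceil>1 / e\<rceil>)"
    show "\<forall>\<^sub>F n in sequentially. \<forall>f. sq_int f \<longrightarrow>
          l2_norm (\<lambda>x. spec_proj D L lam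
                         (T_op (induced_graphon (Nf n) (perm_mat ((\<lambda>n. id) n) (GWM (Nf n) (\<Delta> n))))
                               (spec_proj D L lam f)) x
                       - L (spec_proj D L lam f) x) \<le> e * l2_norm f"
      unfolding eventually_sequentially
    proof (intro exI[of _ n0] allI impI)
      fix n f assume n: "n0 \<le> n" and f: "sq_int f"
      have lm: "lam \<le> real n + 1" using n unfolding n0_def by linarith
      have "1 / e \<le> real n" using n unfolding n0_def by linarith
      then have en: "1 / (real n + 1) \<le> e" using e by (simp add: field_simps)
      have "l2_norm (\<lambda>x. spec_proj D L lam (T_op (induced_graphon (Nf n) (af n)) (spec_proj D L lam f)) x
                       - L (spec_proj D L lam f) x) \<le> (1 / (real n + 1)) * l2_norm f"
        by (rule main_est[OF sa Wl Wg lm Ksq Kb _ f]) simp_all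
      also have "\<dots> \<le> e * l2_norm f" using en l2_norm_nonneg by (rule mult_right_mono)
      finally show "l2_norm (\<lambda>x. spec_proj D L lam
                         (T_op (induced_graphon (Nf n) (perm_mat ((\<lambda>n. id) n) (GWM (Nf n) (\<Delta> n))))
                               (spec_proj D L lam f)) x
                       - L (spec_proj D L lam f) x) \<le> e * l2_norm f"
        by (simp add: pm)
    qed
  qed
  show ?thesis using GSO conv by blast
qed


end
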